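(* Let $\xi=(\omega,\gamma,\mu,c)$ be a normalized quasi-abelian 3-cocycle on a finite crossed module $(G,X,\partial)$. The braided fusion category $\mathcal{C}(\xi)^G$ is nondegenerate if and only if the homomorphism $\partial$ is surjective and $\xi$ is nondegenerate.
   Context: $\mathbb{K}$ is an algebraically closed field of characteristic $0$. A finite crossed module is a triple $(G,X,\partial)$ with $G,X$ finite groups, $G$ acting on $X$ by automorphisms $(g,x)\mapsto {}^{g}x$, and $\partial:X\to G$ a homomorphism with ${}^{\partial(x)}x'=xx'x^{-1}$ and $\partial({}^gx)=g\partial(x)g^{-1}$. A quasi-abelian 3-cocycle on it is a quadruple $\xi=(\omega,\gamma,\mu,c)$ of functions $\omega:X^3\to\mathbb{K}^\times$, $(g,h,x)\mapsto\gamma_{g,h}(x)$ on $G\times G\times X$, $(g,x,y)\mapsto\mu_g(x,y)$ on $G\times X\times X$, $c:X^2\to\mathbb{K}^\times$, such that for all $g,h,k\in G$, $w,x,y,z\in X$: (a) $\omega(x,y,z)\omega(w,xy,z)\omega(w,x,y)=\omega(w,x,yz)\omega(wx,y,z)$; (b) $\gamma_{h,k}(x)\gamma_{g,hk}(x)=\gamma_{gh,k}(x)\gamma_{g,h}({}^kx)$; (c) $\frac{\mu_g(y,z)\mu_g(x,yz)}{\mu_g(xy,z)\mu_g(x,y)}=\frac{\omega({}^gx,{}^gy,{}^gz)}{\omega(x,y,z)}$; (d) $\frac{\gamma_{g,h}(x)\gamma_{g,h}(y)}{\gamma_{g,h}(xy)}=\frac{\mu_g({}^hx,{}^hy)\mu_h(x,y)}{\mu_{gh}(x,y)}$;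 (e) $\frac{c({}^gx,{}^gy)}{c(x,y)}=\frac{\mu_g(xyx^{-1},x)}{\mu_g(x,y)}\cdot\frac{\gamma_{g\partial(x)g^{-1},g}(y)}{\gamma_{g,\partial(x)}(y)}$; (f) $c(xy,z)=\frac{\omega(x,y,z)\,\omega((xy)z(xy)^{-1},x,y)}{\omega(x,yzy^{-1},y)\,\gamma_{\partial(x),\partial(y)}(z)}\,c(x,yzy^{-1})\,c(y,z)$; (g) $c(x,yz)=\frac{\omega(xyx^{-1},x,z)}{\omega(x,y,z)\,\omega(xyx^{-1},xzx^{-1},x)\,\mu_{\partial(x)}(y,z)}\,c(x,y)\,c(x,z)$. It is normalized if $\omega(x,y,z)=1$ whenever one of $x,y,z$ is $e$, $\gamma_{g,h}(x)=1$ whenever one of $g,h,x$ is $e$, $\mu_g(x,y)=1$ whenever one of $g,x,y$ is $e$, and $c(x,y)=1$ whenever $x$ or $y$ is $e$. A normalized $\xi$ is nondegenerate if the symmetric bicharacter $\mathrm{Ker}\,\partial\times\mathrm{Ker}\,\partial\to\mathbb{K}^\times$, $(x,y)\mapsto c(y,x)c(x,y)$, on the abelian group $\mathrm{Ker}\,\partial$ is nondegenerate. $\mathcal{C}(\xi)$ denotes the fusion category $\mathrm{Vec}_X^\omega$ of finite-dimensional $X$-graded vector spaces (tensor product $\otimes_\mathbb{K}$ with degrees multiplied, associativity $(u\otimes v)\otimes w\mapsto\omega(x,y,z)u\otimes(v\otimes w)$ for homogeneous $u,v,w$ of degrees $x,y,z$) with: the $G$-grading with $\mathcal{C}_g$ the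 objects supported on $\partial^{-1}(g)$; functors $T_g$ sending homogeneous $V$ of degree $x$ to the same space in degree ${}^gx$; and for homogeneous $V,W$ of degrees $x,y$ the isomorphisms $\tilde\gamma_{g,h}(V)=\gamma_{g,h}(x)\mathrm{id}_V:T_{gh}(V)\to T_gT_h(V)$, $\tilde\mu_g(V,W)=\mu_g(x,y)\mathrm{id}:T_g(V\otimes W)\to T_gV\otimes T_gW$, $\tilde c(V,W)=c(x,y)\tau_{V,W}:V\otimes W\to T_{\partial(x)}(W)\otimes V$ ($\tau$ the flip). The equivariantization $\mathcal{C}(\xi)^G$ is the braided fusion category of pairs $(V,\{u_g\})$, $u_g:T_g(V)\to V$ isomorphisms with $u_{gh}=u_g\circ T_g(u_h)\circ\tilde\gamma_{g,h}(V)$; morphisms commute with the $u_g$; tensor product $(V\otimes V',\{(u_g\otimes u'_g)\circ\tilde\mu_g(V,V')\})$; associativity from $\mathrm{Vec}_X^\omega$; braiding given on $V_g\otimes V'$ ($V_g$ the component of $V$ in $\mathcal{C}_g$) by $(u'_g\otimes\mathrm{id})\circ\tilde c(V_g,V')$. A braided fusion category is nondegenerate if the only objects $Y$ with $c_{Y,Z}\circ c_{Z,Y}=\mathrm{id}$ and $c_{Z,Y}\circ c_{Y,Z}=\mathrm{id}$ for all objects $Z$ are direct sums of the unit object. *)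

theory Defs
  imports "HOL-Algebra.Group" "HOL-Computational_Algebra.Polynomial"
begin

definition finite_crossed_module ::
  "('g, 'a) monoid_scheme \<Rightarrow> ('x, 'b) monoid_scheme \<Rightarrow> ('g \<Rightarrow> 'x \<Rightarrow> 'x) \<Rightarrow> ('x \<Rightarrow> 'g) \<Rightarrow> bool"
where
  "finite_crossed_module G X act d \<longleftrightarrow>
     group G \<and> group X \<and> finite (carrier G) \<and> finite (carrier X) \<and>
     (\<forall>g\<in>carrier G. \<forall>x\<in>carrier X. act g x \<in> carrier X) \<and>
     (\<forall>x\<in>carrier X. act \<one>\<^bsub>G\<^esub> x = x) \<and>
     (\<forall>g\<in>carrier G. \<forall>h\<in>carrier G. \<forall>x\<in>carrier X. act (g \<otimes>\<^bsub>G\<^esub> h) x = act g (act h x)) \<and>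
     (\<forall>g\<in>carrier G. \<forall>x\<in>carrier X. \<forall>y\<in>carrier X.
        act g (x \<otimes>\<^bsub>X\<^esub> y) = act g x \<otimes>\<^bsub>X\<^esub> act g y) \<and>
     d \<in> hom X G \<and>
     (\<forall>x\<in>carrier X. \<forall>y\<in>carrier X. act (d x) y = x \<otimes>\<^bsub>X\<^esub> y \<otimes>\<^bsub>X\<^esub> inv\<^bsub>X\<^esub> x) \<and>
     (\<forall>g\<in>carrier G. \<forall>x\<in>carrier X. d (act g x) = g \<otimes>\<^bsub>G\<^esub> d x \<otimes>\<^bsub>G\<^esub> inv\<^bsub>G\<^esub> g)"

definition quasi_abelian_3cocycle ::
  "('g, 'a) monoid_scheme \<Rightarrow> ('x, 'b) monoid_scheme \<Rightarrow> ('g \<Rightarrow> 'x \<Rightarrow> 'x) \<Rightarrow> ('x \<Rightarrow> 'g) \<Rightarrow>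
   ('x \<Rightarrow> 'x \<Rightarrow> 'x \<Rightarrow> 'k::field) \<Rightarrow> ('g \<Rightarrow> 'g \<Rightarrow> 'x \<Rightarrow> 'k) \<Rightarrow>
   ('g \<Rightarrow> 'x \<Rightarrow> 'x \<Rightarrow> 'k) \<Rightarrow> ('x \<Rightarrow> 'x \<Rightarrow> 'k) \<Rightarrow> bool"
where
  "quasi_abelian_3cocycle G X act d \<omega> \<gamma> \<mu> c \<longleftrightarrow>
    (let mX = (\<lambda>a b. a \<otimes>\<^bsub>X\<^esub> b); mG = (\<lambda>a b. a \<otimes>\<^bsub>G\<^esub> b); iX = (\<lambda>a. inv\<^bsub>X\<^esub> a); iG = (\<lambda>a. inv\<^bsub>G\<^esub> a);
         CG = carrier G; CX = carrier X in
    \<comment> \<open>values in K^x\<close>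
    (\<forall>x\<in>CX. \<forall>y\<in>CX. \<forall>z\<in>CX. \<omega> x y z \<noteq> 0) \<and>
    (\<forall>g\<in>CG. \<forall>h\<in>CG. \<forall>x\<in>CX. \<gamma> g h x \<noteq> 0) \<and>
    (\<forall>g\<in>CG. \<forall>x\<in>CX. \<forall>y\<in>CX. \<mu> g x y \<noteq> 0) \<and>
    (\<forall>x\<in>CX. \<forall>y\<in>CX. c x y \<noteq> 0) \<and>
    \<comment> \<open>(a)\<close>
    (\<forall>w\<in>CX. \<forall>x\<in>CX. \<forall>y\<in>CX. \<forall>z\<in>CX.
       \<omega> x y z * \<omega> w (mX x y) z * \<omega> w x y = \<omega> w x (mX y z) * \<omega> (mX w x) y z) \<and>
    \<comment> \<open>(b)\<close>
    (\<forall>g\<in>CG. \<forall>h\<in>CG. \<forall>k\<in>CG. \<forall>x\<in>CX.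
       \<gamma> h k x * \<gamma> g (mG h k) x = \<gamma> (mG g h) k x * \<gamma> g h (act k x)) \<and>
    \<comment> \<open>(c)\<close>
    (\<forall>g\<in>CG. \<forall>x\<in>CX. \<forall>y\<in>CX. \<forall>z\<in>CX.
       (\<mu> g y z * \<mu> g x (mX y z)) / (\<mu> g (mX x y) z * \<mu> g x y)
         = \<omega> (act g x) (act g y) (act g z) / \<omega> x y z) \<and>
    \<comment> \<open>(d)\<close>
    (\<forall>g\<in>CG. \<forall>h\<in>CG. \<forall>x\<in>CX. \<forall>y\<in>CX.
       (\<gamma> g h x * \<gamma> g h y) / \<gamma> g h (mX x y)
         = (\<mu> g (act h x) (act h y) * \<mu> h x y) / \<mu> (mG g h) x y) \<and>
    \<comment> \<open>(e)\<close>
    (\<forall>g\<in>CG. \<forall>x\<in>CX. \<forall>y\<in>CX.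
       c (act g x) (act g y) / c x y
         = (\<mu> g (mX (mX x y) (iX x)) x / \<mu> g x y) *
           (\<gamma> (mG (mG g (d x)) (iG g)) g y / \<gamma> g (d x) y)) \<and>
    \<comment> \<open>(f)\<close>
    (\<forall>x\<in>CX. \<forall>y\<in>CX. \<forall>z\<in>CX.
       c (mX x y) z
         = (\<omega> x y z * \<omega> (mX (mX (mX x y) z) (iX (mX x y))) x y)
             / (\<omega> x (mX (mX y z) (iX y)) y * \<gamma> (d x) (d y) z)
           * c x (mX (mX y z) (iX y)) * c y z) \<and>
    \<comment> \<open>(g)\<close>
    (\<forall>x\<in>CX. \<forall>y\<in>CX. \<forall>z\<in>CX.
       c x (mX y z)
         = \<omega> (mX (mX x y) (iX x)) x z
             / (\<omega> x y z * \<omega> (mX (mX x y) (iX x)) (mX (mX x z) (iX x)) x * \<mu> (d x) y z)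
           * c x y * c x z))"

definition normalized_cocycle ::
  "('g, 'a) monoid_scheme \<Rightarrow> ('x, 'b) monoid_scheme \<Rightarrow>
   ('x \<Rightarrow> 'x \<Rightarrow> 'x \<Rightarrow> 'k::field) \<Rightarrow> ('g \<Rightarrow> 'g \<Rightarrow> 'x \<Rightarrow> 'k) \<Rightarrow>
   ('g \<Rightarrow> 'x \<Rightarrow> 'x \<Rightarrow> 'k) \<Rightarrow> ('x \<Rightarrow> 'x \<Rightarrow> 'k) \<Rightarrow> bool"
where
  "normalized_cocycle G X \<omega> \<gamma> \<mu> c \<longleftrightarrow>
    (let eX = \<one>\<^bsub>X\<^esub>; eG = \<one>\<^bsub>G\<^esub>; CG = carrier G; CX = carrier X in
    (\<forall>x\<in>CX. \<forall>y\<in>CX. \<forall>z\<in>CX. (x = eX \<or> y = eX \<or> z = eX) \<longrightarrow> \<omega> x y z = 1) \<and>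
    (\<forall>g\<in>CG. \<forall>h\<in>CG. \<forall>x\<in>CX. (g = eG \<or> h = eG \<or> x = eX) \<longrightarrow> \<gamma> g h x = 1) \<and>
    (\<forall>g\<in>CG. \<forall>x\<in>CX. \<forall>y\<in>CX. (g = eG \<or> x = eX \<or> y = eX) \<longrightarrow> \<mu> g x y = 1) \<and>
    (\<forall>x\<in>CX. \<forall>y\<in>CX. (x = eX \<or> y = eX) \<longrightarrow> c x y = 1))"

definition nondegenerate_cocycle ::
  "('g, 'a) monoid_scheme \<Rightarrow> ('x, 'b) monoid_scheme \<Rightarrow> ('x \<Rightarrow> 'g) \<Rightarrow> ('x \<Rightarrow> 'x \<Rightarrow> 'k::field) \<Rightarrow> bool"
where
  "nondegenerate_cocycle G X d c \<longleftrightarrow>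
    (let K = {x \<in> carrier X. d x = \<one>\<^bsub>G\<^esub>} in
     \<forall>x\<in>K. (\<forall>y\<in>K. c y x * c x y = 1) \<longrightarrow> x = \<one>\<^bsub>X\<^esub>)"

text \<open>An object of C(xi)^G is modelled by an X-graded vector space with a finite basis
  B (a finite set of natural numbers), a degree function on the basis, and for every g
  the matrix (w.r.t. this basis; rows = target, columns = source) of u_g : T_g(V) -> V.
  T_g(V) has the same underlying space and basis, the basis vector b in degree act g (deg b).\<close>

type_synonym ('g, 'x, 'k) eq_obj = "nat set \<times> (nat \<Rightarrow> 'x) \<times> ('g \<Rightarrow> nat \<Rightarrow> nat \<Rightarrow> 'k)"

definition mat_comp :: "nat set \<Rightarrow> (nat \<Rightarrow> nat \<Rightarrow> 'k::field) \<Rightarrow> (nat \<Rightarrow> nat \<Rightarrow> 'k) \<Rightarrow> nat \<Rightarrow> nat \<Rightarrow> 'k"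
  where "mat_comp B M N i k = (\<Sum>j\<in>B. M i j * N j k)"

definition is_eq_obj ::
  "('g, 'a) monoid_scheme \<Rightarrow> ('x, 'b) monoid_scheme \<Rightarrow> ('g \<Rightarrow> 'x \<Rightarrow> 'x) \<Rightarrow>
   ('g \<Rightarrow> 'g \<Rightarrow> 'x \<Rightarrow> 'k::field) \<Rightarrow> ('g, 'x, 'k) eq_obj \<Rightarrow> bool"
where
  "is_eq_obj G X act \<gamma> V \<longleftrightarrow>
    (case V of (B, deg, u) \<Rightarrow>
      finite B \<and> (\<forall>b\<in>B. deg b \<in> carrier X) \<and>
      \<comment> \<open>u_g is a morphism of graded spaces T_g(V) -> V\<close>
      (\<forall>g\<in>carrier G. \<forall>b'\<in>B. \<forall>b\<in>B. u g b' b \<noteq> 0 \<longrightarrow> deg b' = act g (deg b)) \<and>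
      \<comment> \<open>u_g is an isomorphism\<close>
      (\<forall>g\<in>carrier G. \<exists>v. (\<forall>b'\<in>B. \<forall>b\<in>B. v b' b \<noteq> 0 \<longrightarrow> act g (deg b') = deg b) \<and>
          (\<forall>i\<in>B. \<forall>k\<in>B. mat_comp B v (u g) i k = (if i = k then 1 else 0)) \<and>
          (\<forall>i\<in>B. \<forall>k\<in>B. mat_comp B (u g) v i k = (if i = k then 1 else 0))) \<and>
      \<comment> \<open>u_{gh} = u_g o T_g(u_h) o gamma~_{g,h}(V)\<close>
      (\<forall>g\<in>carrier G. \<forall>h\<in>carrier G. \<forall>b'\<in>B. \<forall>b\<in>B.
         u (g \<otimes>\<^bsub>G\<^esub> h) b' b = mat_comp B (u g) (u h) b' b * \<gamma> g h (deg b)))"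

definition is_eq_mor ::
  "('g, 'a) monoid_scheme \<Rightarrow> ('g, 'x, 'k::field) eq_obj \<Rightarrow> ('g, 'x, 'k) eq_obj \<Rightarrow>
   (nat \<Rightarrow> nat \<Rightarrow> 'k) \<Rightarrow> bool"
where
  "is_eq_mor G V W f \<longleftrightarrow>
    (case V of (B, deg, u) \<Rightarrow> case W of (B', deg', u') \<Rightarrow>
      (\<forall>b'\<in>B'. \<forall>b\<in>B. f b' b \<noteq> 0 \<longrightarrow> deg' b' = deg b) \<and>
      (\<forall>g\<in>carrier G. \<forall>b'\<in>B'. \<forall>b\<in>B. mat_comp B f (u g) b' b = mat_comp B' (u' g) f b' b))"

definition eq_iso ::
  "('g, 'a) monoid_scheme \<Rightarrow> ('g, 'x, 'k::field) eq_obj \<Rightarrow> ('g, 'x, 'k) eq_obj \<Rightarrow> bool"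
where
  "eq_iso G V W \<longleftrightarrow>
    (\<exists>f f'. is_eq_mor G V W f \<and> is_eq_mor G W V f' \<and>
       (\<forall>i\<in>fst V. \<forall>k\<in>fst V. mat_comp (fst W) f' f i k = (if i = k then 1 else 0)) \<and>
       (\<forall>i\<in>fst W. \<forall>k\<in>fst W. mat_comp (fst V) f f' i k = (if i = k then 1 else 0)))"

text \<open>Direct sum of n copies of the unit object (K in degree e with u_g = id).\<close>
definition unit_sum :: "('x, 'b) monoid_scheme \<Rightarrow> nat \<Rightarrow> ('g, 'x, 'k::field) eq_obj"
  where "unit_sum X n = ({..<n}, (\<lambda>_. \<one>\<^bsub>X\<^esub>), (\<lambda>g i j. if i = j then 1 else 0))"

text \<open>Braiding c_{Y,Z} : Y (x) Z -> Z (x) Y, as a matrix indexed by basis pairs: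
  on a (x) b with deg a = y, deg b = z it is (u^Z_{d y} (x) id) o c(y,z) flip.\<close>
definition braid ::
  "('x \<Rightarrow> 'g) \<Rightarrow> ('x \<Rightarrow> 'x \<Rightarrow> 'k::field) \<Rightarrow> ('g, 'x, 'k) eq_obj \<Rightarrow> ('g, 'x, 'k) eq_obj \<Rightarrow>
   (nat \<times> nat) \<Rightarrow> (nat \<times> nat) \<Rightarrow> 'k"
where
  "braid d c Y Z = (\<lambda>(b', a') (a, b).
     (case Y of (BY, degY, uY) \<Rightarrow> case Z of (BZ, degZ, uZ) \<Rightarrow>
       if a' = a then c (degY a) (degZ b) * uZ (d (degY a)) b' b else 0))"

definition double_braid_id ::
  "('x \<Rightarrow> 'g) \<Rightarrow> ('x \<Rightarrow> 'x \<Rightarrow> 'k::field) \<Rightarrow> ('g, 'x, 'k) eq_obj \<Rightarrow> ('g, 'x, 'k) eq_obj \<Rightarrow> bool"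
where
  "double_braid_id d c Y Z \<longleftrightarrow>
    (\<forall>p\<in>fst Y \<times> fst Z. \<forall>q\<in>fst Y \<times> fst Z.
       (\<Sum>r\<in>fst Z \<times> fst Y. braid d c Z Y p r * braid d c Y Z r q) = (if p = q then 1 else 0))"

definition eq_cat_nondegenerate ::
  "('g, 'a) monoid_scheme \<Rightarrow> ('x, 'b) monoid_scheme \<Rightarrow> ('g \<Rightarrow> 'x \<Rightarrow> 'x) \<Rightarrow> ('x \<Rightarrow> 'g) \<Rightarrow>
   ('g \<Rightarrow> 'g \<Rightarrow> 'x \<Rightarrow> 'k::field) \<Rightarrow> ('x \<Rightarrow> 'x \<Rightarrow> 'k) \<Rightarrow> bool"
where
  "eq_cat_nondegenerate G X act d \<gamma> c \<longleftrightarrow>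
    (\<forall>Y. is_eq_obj G X act \<gamma> Y \<longrightarrow>
       (\<forall>Z. is_eq_obj G X act \<gamma> Z \<longrightarrow> double_braid_id d c Y Z \<and> double_braid_id d c Z Y) \<longrightarrow>
       (\<exists>n. eq_iso G Y (unit_sum X n)))"

end

theory Submission
  imports Defs
begin


lemma DB_iff:
  assumes "finite BY" "finite BZ"
  shows "double_braid_id d c (BY,dY,uY) (BZ,dZ,uZ) \<longleftrightarrow>
    (\<forall>a1\<in>BY. \<forall>b1\<in>BZ. \<forall>a2\<in>BY. \<forall>b2\<in>BZ.
      c (dZ b1) (dY a2) * uY (d (dZ b1)) a1 a2 * (c (dY a2) (dZ b2) * uZ (d (dY a2)) b1 b2)
        = (if a1 = a2 \<and> b1 = b2 then 1 else 0))"
proof -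
  have key: "(\<Sum>r\<in>BZ \<times> BY. braid d c (BZ,dZ,uZ) (BY,dY,uY) (a1,b1) r * braid d c (BY,dY,uY) (BZ,dZ,uZ) r (a2,b2))
     = c (dZ b1) (dY a2) * uY (d (dZ b1)) a1 a2 * (c (dY a2) (dZ b2) * uZ (d (dY a2)) b1 b2)"
    if "a1\<in>BY" "b1\<in>BZ" "a2\<in>BY" "b2\<in>BZ" for a1 b1 a2 b2
  proof -
    have "(\<Sum>r\<in>BZ \<times> BY. braid d c (BZ,dZ,uZ) (BY,dY,uY) (a1,b1) r * braid d c (BY,dY,uY) (BZ,dZ,uZ) r (a2,b2))
      = (\<Sum>r\<in>BZ \<times> BY. if r = (b1,a2) then c (dZ b1) (dY a2) * uY (d (dZ b1)) a1 a2 * (c (dY a2) (dZ b2) * uZ (d (dY a2)) b1 b2) else 0)"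
      by (rule sum.cong) (auto simp: braid_def split: if_splits)
    also have "\<dots> = c (dZ b1) (dY a2) * uY (d (dZ b1)) a1 a2 * (c (dY a2) (dZ b2) * uZ (d (dY a2)) b1 b2)"
      using that assms by (simp add: sum.delta')
    finally show ?thesis .
  qed
  show ?thesis unfolding double_braid_id_def using key by (auto simp: prod_eq_iff)
qed

lemma sum_assoc_gen:
  fixes A C D :: "nat \<Rightarrow> nat \<Rightarrow> 'k::field"
  assumes "finite B1" "finite B2"
  shows "(\<Sum>j\<in>B1. (\<Sum>l\<in>B2. A i l * C l j) * D j k) = (\<Sum>l\<in>B2. A i l * (\<Sum>j\<in>B1. C l j * D j k))"
proof -
  have "(\<Sum>j\<in>B1. (\<Sum>l\<in>B2. A i l * C l j) * D j k) = (\<Sum>j\<in>B1. \<Sum>l\<in>B2. A i l * (C l j * D j k))"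
    by (simp add: sum_distrib_right mult.assoc)
  also have "\<dots> = (\<Sum>l\<in>B2. \<Sum>j\<in>B1. A i l * (C l j * D j k))" by (rule sum.swap)
  also have "\<dots> = (\<Sum>l\<in>B2. A i l * (\<Sum>j\<in>B1. C l j * D j k))" by (simp add: sum_distrib_left)
  finally show ?thesis .
qed


lemma sum_if_eq: "finite B \<Longrightarrow> i \<in> B \<Longrightarrow> (\<Sum>j\<in>B. (if i = j then 1 else 0) * (M j k::'k::field)) = M i k"
proof -
  assume "finite B" "i \<in> B"
  have "(\<Sum>j\<in>B. (if i = j then 1 else 0) * M j k) = (\<Sum>j\<in>B. if i = j then M j k else 0)"
    by (rule sum.cong) auto
  then show ?thesis using \<open>finite B\<close> \<open>i \<in> B\<close> by (simp add: sum.delta)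
qed

lemma sum_if_eq2: "finite B \<Longrightarrow> k \<in> B \<Longrightarrow> (\<Sum>j\<in>B. (M i j::'k::field) * (if j = k then 1 else 0)) = M i k"
proof -
  assume "finite B" "k \<in> B"
  have "(\<Sum>j\<in>B. M i j * (if j = k then 1 else 0)) = (\<Sum>j\<in>B. if j = k then M i j else 0)"
    by (rule sum.cong) auto
  then show ?thesis using \<open>finite B\<close> \<open>k \<in> B\<close> by (simp add: sum.delta')
qed

lemma eq_obj_unit:
  assumes obj: "is_eq_obj G X act \<gamma> (B, deg, u)" and G: "group G"
    and gam1: "\<forall>b\<in>B. \<gamma> \<one>\<^bsub>G\<^esub> \<one>\<^bsub>G\<^esub> (deg b) = 1"
    and i: "i \<in> B" and k: "k \<in> B"
  shows "u \<one>\<^bsub>G\<^esub> i k = (if i = k then 1 else 0)"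
proof -
  let ?e = "\<one>\<^bsub>G\<^esub>"
  have e: "?e \<in> carrier G" using G by (simp add: group.is_monoid monoid.one_closed)
  have fin: "finite B" using obj by (simp add: is_eq_obj_def)
  have law: "\<And>i k. i\<in>B \<Longrightarrow> k\<in>B \<Longrightarrow> u ?e i k = mat_comp B (u ?e) (u ?e) i k"
  proof -
    fix i k assume ik: "i\<in>B" "k\<in>B"
    have "u (?e \<otimes>\<^bsub>G\<^esub> ?e) i k = mat_comp B (u ?e) (u ?e) i k * \<gamma> ?e ?e (deg k)"
      using obj e ik unfolding is_eq_obj_def by auto
    then show "u ?e i k = mat_comp B (u ?e) (u ?e) i k" using gam1 ik e G by (simp add: group.is_monoid monoid.l_one)
  qed
  obtain v where v: "\<forall>i\<in>B. \<forall>k\<in>B. mat_comp B v (u ?e) i k = (if i = k then 1 else 0)"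
  proof -
    have "\<forall>g\<in>carrier G. \<exists>v. (\<forall>b'\<in>B. \<forall>b\<in>B. v b' b \<noteq> 0 \<longrightarrow> act g (deg b') = deg b) \<and>
          (\<forall>i\<in>B. \<forall>k\<in>B. mat_comp B v (u g) i k = (if i = k then 1 else 0)) \<and>
          (\<forall>i\<in>B. \<forall>k\<in>B. mat_comp B (u g) v i k = (if i = k then 1 else 0))"
      using obj by (simp add: is_eq_obj_def)
    then show ?thesis using e that by blast
  qed
  have "u ?e i k = (\<Sum>j\<in>B. (if i = j then 1 else 0) * u ?e j k)" using fin i sum_if_eq[of B i "u ?e" k] by simp
  also have "\<dots> = (\<Sum>j\<in>B. mat_comp B v (u ?e) i j * u ?e j k)" using v i by (intro sum.cong) auto
  also have "\<dots> = (\<Sum>l\<in>B. v i l * mat_comp B (u ?e) (u ?e) l k)"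
    unfolding mat_comp_def using sum_assoc_gen[OF fin fin] .
  also have "\<dots> = (\<Sum>l\<in>B. v i l * u ?e l k)" using law k by (intro sum.cong) auto
  also have "\<dots> = (if i = k then 1 else 0)" using v i k by (simp add: mat_comp_def)
  finally show ?thesis .
qed

lemma iso_unit_sum:
  fixes G :: "('g, 'a) monoid_scheme" and X :: "('x, 'b) monoid_scheme" and deg :: "nat \<Rightarrow> 'x"
    and u :: "'g \<Rightarrow> nat \<Rightarrow> nat \<Rightarrow> 'k::field"
  assumes iso: "eq_iso G (B, deg, u) (unit_sum X n)" and fin: "finite B"
  shows "(\<forall>b\<in>B. deg b = \<one>\<^bsub>X\<^esub>) \<and> (\<forall>g\<in>carrier G. \<forall>i\<in>B. \<forall>k\<in>B. u g i k = (if i = k then 1 else 0))"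
proof -
  obtain f f' where m1: "is_eq_mor G (B, deg, u) (unit_sum X n) f"
    and m2: "is_eq_mor G (unit_sum X n) (B, deg, u) f'"
    and inv1: "\<forall>i\<in>B. \<forall>k\<in>B. mat_comp {..<n} f' f i k = (if i = k then 1 else 0)"
  proof -
    from iso obtain f f' where "is_eq_mor G (B, deg, u) (unit_sum X n) f" "is_eq_mor G (unit_sum X n) (B, deg, u) f'"
       "\<forall>i\<in>fst (B, deg, u). \<forall>k\<in>fst (B, deg, u). mat_comp (fst (unit_sum X n :: ('g,'x,'k) eq_obj)) f' f i k = (if i = k then 1 else 0)"
      unfolding eq_iso_def by (elim exE conjE) assumption
    then show ?thesis using that by (simp add: unit_sum_def)
  qed
  have deg0: "\<forall>b'\<in>B. \<forall>b<n. f' b' b \<noteq> 0 \<longrightarrow> deg b' = \<one>\<^bsub>X\<^esub>"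
    using m2 by (auto simp: is_eq_mor_def unit_sum_def)
  have comm: "\<forall>g\<in>carrier G. \<forall>b'\<in>B. \<forall>b<n. mat_comp {..<n} f' (\<lambda>i j. if i = j then 1 else 0) b' b = mat_comp B (u g) f' b' b"
    using m2 by (simp add: is_eq_mor_def unit_sum_def)
  have comm2: "mat_comp B (u g) f' b' b = f' b' b" if "g \<in> carrier G" "b' \<in> B" "b < n" for g b' b
    using comm that sum_if_eq2[of "{..<n}" b f' b'] by (simp add: mat_comp_def)
  have A: "\<forall>b\<in>B. deg b = \<one>\<^bsub>X\<^esub>"
  proof
    fix b assume b: "b \<in> B"
    have "mat_comp {..<n} f' f b b = 1" using inv1 b by (simp only: if_True ball_simps(1)) (metis)
    then have "(\<Sum>j<n. f' b j * f j b) \<noteq> 0" unfolding mat_comp_def by simp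
    then obtain j where j: "j \<in> {..<n}" "f' b j * f j b \<noteq> 0" by (rule sum.not_neutral_contains_not_neutral)
    then have "f' b j \<noteq> 0" by simp
    then show "deg b = \<one>\<^bsub>X\<^esub>" using deg0 b j(1) by blast
  qed
  have B: "u g i k = (if i = k then 1 else 0)" if g: "g \<in> carrier G" and i: "i \<in> B" and k: "k \<in> B" for g i k
  proof -
    have "u g i k = (\<Sum>j\<in>B. u g i j * (if j = k then 1 else 0))" using fin k sum_if_eq2[of B k "u g" i] by simp
    also have "\<dots> = (\<Sum>j\<in>B. u g i j * mat_comp {..<n} f' f j k)" using inv1 k by (intro sum.cong) auto
    also have "\<dots> = (\<Sum>l<n. mat_comp B (u g) f' i l * f l k)"
      unfolding mat_comp_def using sum_assoc_gen[OF finite_lessThan fin, where A="u g" and C=f' and D=f] by simp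
    also have "\<dots> = (\<Sum>l<n. f' i l * f l k)" using comm2 g i by (intro sum.cong) auto
    also have "\<dots> = (if i = k then 1 else 0)" using inv1 i k by (simp add: mat_comp_def)
    finally show ?thesis .
  qed
  show ?thesis using A B by blast
qed


lemma sum_enc:
  fixes N :: nat and F :: "nat \<Rightarrow> 'k::comm_monoid_add"
  assumes bij: "bij_betw enc {..<N} S" and t: "t \<in> S"
  shows "(\<Sum>j<N. if enc j = t then F j else 0) = F (inv_into {..<N} enc t)"
proof -
  let ?j = "inv_into {..<N} enc t"
  have j: "?j \<in> {..<N}" using bij t by (metis bij_betw_def inv_into_into)
  have "(\<Sum>j<N. if enc j = t then F j else 0) = (\<Sum>j<N. if j = ?j then F j else 0)"
  proof (rule sum.cong)
    fix j assume "j \<in> {..<N}"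
    then have "enc j = t \<longleftrightarrow> j = ?j" using bij t
      by (metis bij_betw_imp_inj_on bij_betw_inv_into_right inv_into_f_f)
    then show "(if enc j = t then F j else 0) = (if j = ?j then F j else 0)" by simp
  qed simp
  also have "\<dots> = F ?j" using j by simp
  finally show ?thesis .
qed

lemma monomial_obj:
  fixes G :: "('g, 'a) monoid_scheme" and X :: "('x, 'b) monoid_scheme"
    and \<gamma> :: "'g \<Rightarrow> 'g \<Rightarrow> 'x \<Rightarrow> 'k::field" and lam :: "'g \<Rightarrow> 's \<Rightarrow> 'k"
  assumes G: "group G"
    and bij: "bij_betw enc {..<N} S"
    and pS: "\<And>h s. h \<in> carrier G \<Longrightarrow> s \<in> S \<Longrightarrow> p h s \<in> S"
    and p1: "\<And>s. s \<in> S \<Longrightarrow> p \<one>\<^bsub>G\<^esub> s = s"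
    and pm: "\<And>g h s. g \<in> carrier G \<Longrightarrow> h \<in> carrier G \<Longrightarrow> s \<in> S \<Longrightarrow> p (g \<otimes>\<^bsub>G\<^esub> h) s = p g (p h s)"
    and \<delta>X: "\<And>s. s \<in> S \<Longrightarrow> \<delta> s \<in> carrier X"
    and \<delta>p: "\<And>h s. h \<in> carrier G \<Longrightarrow> s \<in> S \<Longrightarrow> \<delta> (p h s) = act h (\<delta> s)"
    and lnz: "\<And>h s. h \<in> carrier G \<Longrightarrow> s \<in> S \<Longrightarrow> lam h s \<noteq> 0"
    and llaw: "\<And>g h s. g \<in> carrier G \<Longrightarrow> h \<in> carrier G \<Longrightarrow> s \<in> S \<Longrightarrow>
                 lam (g \<otimes>\<^bsub>G\<^esub> h) s = lam g (p h s) * lam h s * \<gamma> g h (\<delta> s)"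
  shows "is_eq_obj G X act \<gamma> ({..<N}, \<lambda>j. \<delta> (enc j), \<lambda>h i j. if enc i = p h (enc j) then lam h (enc j) else 0)"
proof -
  let ?u = "\<lambda>h i j. if enc i = p h (enc j) then lam h (enc j) else 0"
  let ?idx = "inv_into {..<N} enc"
  have encS: "\<And>j. j < N \<Longrightarrow> enc j \<in> S" using bij by (auto simp: bij_betw_def)
  have enc_inj: "\<And>i j. i < N \<Longrightarrow> j < N \<Longrightarrow> enc i = enc j \<Longrightarrow> i = j"
    using bij by (auto simp: bij_betw_def inj_on_def)
  have pinj: "\<And>h s t. h \<in> carrier G \<Longrightarrow> s \<in> S \<Longrightarrow> t \<in> S \<Longrightarrow> p h s = p h t \<Longrightarrow> s = t"
  proof -
    fix h s t assume h: "h \<in> carrier G" and st: "s \<in> S" "t \<in> S" "p h s = p h t"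
    have ih: "inv\<^bsub>G\<^esub> h \<in> carrier G" "inv\<^bsub>G\<^esub> h \<otimes>\<^bsub>G\<^esub> h = \<one>\<^bsub>G\<^esub>" using G h by (auto simp: group.l_inv group.inv_closed)
    have "s = p (inv\<^bsub>G\<^esub> h \<otimes>\<^bsub>G\<^esub> h) s" using ih st p1 by simp
    also have "\<dots> = p (inv\<^bsub>G\<^esub> h) (p h s)" by (rule pm[OF ih(1) h st(1)])
    also have "\<dots> = p (inv\<^bsub>G\<^esub> h) (p h t)" using st by simp
    also have "\<dots> = p (inv\<^bsub>G\<^esub> h \<otimes>\<^bsub>G\<^esub> h) t" by (rule pm[OF ih(1) h st(2), symmetric])
    also have "\<dots> = t" using ih st p1 by simp
    finally show "s = t" .
  qed
  have psurj: "\<And>h s. h \<in> carrier G \<Longrightarrow> s \<in> S \<Longrightarrow> p h (p (inv\<^bsub>G\<^esub> h) s) = s"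
  proof -
    fix h s assume h: "h \<in> carrier G" and s: "s \<in> S"
    have ih: "inv\<^bsub>G\<^esub> h \<in> carrier G" "h \<otimes>\<^bsub>G\<^esub> inv\<^bsub>G\<^esub> h = \<one>\<^bsub>G\<^esub>" using G h by (auto simp: group.r_inv group.inv_closed)
    show "p h (p (inv\<^bsub>G\<^esub> h) s) = s" using pm[OF h ih(1) s] ih p1 s by simp
  qed
  have idx: "\<And>t. t \<in> S \<Longrightarrow> ?idx t < N \<and> enc (?idx t) = t"
    using bij by (metis bij_betw_def bij_betw_inv_into_right inv_into_into lessThan_iff)
  have P1: "\<forall>g\<in>carrier G. \<forall>b'\<in>{..<N}. \<forall>b\<in>{..<N}. ?u g b' b \<noteq> 0 \<longrightarrow> \<delta> (enc b') = act g (\<delta> (enc b))"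
  proof (intro ballI impI)
    fix g b' b assume g: "g \<in> carrier G" and b': "b' \<in> {..<N}" and b: "b \<in> {..<N}" and nz: "?u g b' b \<noteq> 0"
    from nz have "enc b' = p g (enc b)" by (cases "enc b' = p g (enc b)") simp_all
    then show "\<delta> (enc b') = act g (\<delta> (enc b))" using \<delta>p[OF g encS] b by simp
  qed
  have P2: "\<exists>v. (\<forall>b'\<in>{..<N}. \<forall>b\<in>{..<N}. v b' b \<noteq> 0 \<longrightarrow> act h (\<delta> (enc b')) = \<delta> (enc b)) \<and>
          (\<forall>i\<in>{..<N}. \<forall>k\<in>{..<N}. mat_comp {..<N} v (?u h) i k = (if i = k then 1 else 0)) \<and>
          (\<forall>i\<in>{..<N}. \<forall>k\<in>{..<N}. mat_comp {..<N} (?u h) v i k = (if i = k then 1 else 0))"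
    if h: "h \<in> carrier G" for h
  proof -
    let ?v = "\<lambda>i j. if enc j = p h (enc i) then 1 / lam h (enc i) else 0"
    have A: "\<forall>b'\<in>{..<N}. \<forall>b\<in>{..<N}. ?v b' b \<noteq> 0 \<longrightarrow> act h (\<delta> (enc b')) = \<delta> (enc b)"
    proof (intro ballI impI)
      fix b' b assume b': "b' \<in> {..<N}" and b: "b \<in> {..<N}" and nz: "?v b' b \<noteq> 0"
      from nz have "enc b = p h (enc b')" by (cases "enc b = p h (enc b')") simp_all
      then show "act h (\<delta> (enc b')) = \<delta> (enc b)" using \<delta>p[OF h encS] b' by simp
    qed
    have B: "mat_comp {..<N} ?v (?u h) i k = (if i = k then 1 else 0)" if ik: "i < N" "k < N" for i k
    proof -
      have "mat_comp {..<N} ?v (?u h) i k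
        = (\<Sum>j<N. if enc j = p h (enc i) then (if i = k then 1 else 0) else 0)"
        unfolding mat_comp_def
      proof (rule sum.cong)
        fix j assume j: "j \<in> {..<N}"
        show "?v i j * ?u h j k = (if enc j = p h (enc i) then (if i = k then 1 else 0) else 0)"
        proof (cases "enc j = p h (enc i)")
          case True
          have "enc j = p h (enc k) \<longleftrightarrow> i = k"
          proof
            assume "enc j = p h (enc k)"
            then have "p h (enc i) = p h (enc k)" using True by simp
            then have "enc i = enc k" by (rule pinj[OF h encS[OF ik(1)] encS[OF ik(2)]])
            then show "i = k" by (rule enc_inj[OF ik])
          next
            assume "i = k" then show "enc j = p h (enc k)" using True by simp
          qed
          then show ?thesis using True lnz[OF h encS[OF ik(1)]] by auto
        qed simp
      qed simp
      also have "\<dots> = (if i = k then 1 else 0)"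
        using sum_enc[OF bij pS[OF h encS[OF ik(1)]], of "\<lambda>_. if i = k then 1 else 0"] by simp
      finally show ?thesis .
    qed
    have C: "mat_comp {..<N} (?u h) ?v i k = (if i = k then 1 else 0)" if ik: "i < N" "k < N" for i k
    proof -
      let ?t = "p (inv\<^bsub>G\<^esub> h) (enc i)"
      have ihc: "inv\<^bsub>G\<^esub> h \<in> carrier G" using G h by (simp add: group.inv_closed)
      have tS: "?t \<in> S" using pS[OF ihc encS[OF ik(1)]] .
      have "mat_comp {..<N} (?u h) ?v i k
        = (\<Sum>j<N. if enc j = ?t then (if i = k then 1 else 0) else 0)"
        unfolding mat_comp_def
      proof (rule sum.cong)
        fix j assume j: "j \<in> {..<N}"
        have pt: "p h ?t = enc i" by (rule psurj[OF h encS[OF ik(1)]])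
        have jN: "j < N" using j by simp
        have eq1: "enc i = p h (enc j) \<longleftrightarrow> enc j = ?t"
        proof
          assume "enc i = p h (enc j)"
          then have "p h (enc j) = p h ?t" using pt by simp
          then show "enc j = ?t" by (rule pinj[OF h encS[OF jN] tS])
        next
          assume "enc j = ?t" then show "enc i = p h (enc j)" using pt by simp
        qed
        show "?u h i j * ?v j k = (if enc j = ?t then (if i = k then 1 else 0) else 0)"
        proof (cases "enc j = ?t")
          case True
          then have e: "enc i = p h (enc j)" using eq1 by simp
          have ek: "enc k = p h (enc j) \<longleftrightarrow> i = k"
          proof
            assume "enc k = p h (enc j)"
            then have "enc i = enc k" using e by simp
            then show "i = k" by (rule enc_inj[OF ik])
          next
            assume "i = k" then show "enc k = p h (enc j)" using e by simp
          qed
          have l: "lam h (enc j) \<noteq> 0" using lnz[OF h encS[OF jN]] .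
          show ?thesis using True e l by (simp only: ek if_True) simp
        qed (use eq1 in simp)
      qed simp
      also have "\<dots> = (if i = k then 1 else 0)"
        using sum_enc[OF bij tS, of "\<lambda>_. if i = k then 1 else 0"] by simp
      finally show ?thesis .
    qed
    have B': "\<forall>i\<in>{..<N}. \<forall>k\<in>{..<N}. mat_comp {..<N} ?v (?u h) i k = (if i = k then 1 else 0)"
      using B by simp
    have C': "\<forall>i\<in>{..<N}. \<forall>k\<in>{..<N}. mat_comp {..<N} (?u h) ?v i k = (if i = k then 1 else 0)"
      using C by simp
    show ?thesis apply (rule exI[where x="?v"]) using A B' C' by (intro conjI) 
  qed
  have P3: "?u (g \<otimes>\<^bsub>G\<^esub> h) b' b = mat_comp {..<N} (?u g) (?u h) b' b * \<gamma> g h (\<delta> (enc b))"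
    if g: "g \<in> carrier G" and h: "h \<in> carrier G" and b': "b' < N" and b: "b < N" for g h b' b
  proof -
    let ?t = "p h (enc b)"
    have tS: "?t \<in> S" using pS[OF h encS[OF b]] .
    have "mat_comp {..<N} (?u g) (?u h) b' b = (\<Sum>j<N. if enc j = ?t then ?u g b' j * lam h (enc b) else 0)"
      unfolding mat_comp_def by (intro sum.cong refl) simp
    also have "\<dots> = ?u g b' (?idx ?t) * lam h (enc b)"
      using sum_enc[OF bij tS, of "\<lambda>j. ?u g b' j * lam h (enc b)"] by simp
    also have "\<dots> = (if enc b' = p g ?t then lam g ?t * lam h (enc b) else 0)"
      using idx[OF tS] by simp
    finally have "mat_comp {..<N} (?u g) (?u h) b' b * \<gamma> g h (\<delta> (enc b))
       = (if enc b' = p g ?t then lam g ?t * lam h (enc b) * \<gamma> g h (\<delta> (enc b)) else 0)" by simp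
    then show ?thesis using pm[OF g h encS[OF b]] llaw[OF g h encS[OF b]] by simp
  qed
  show ?thesis unfolding is_eq_obj_def prod.case
  proof (intro conjI)
    show "finite {..<N}" by simp
    show "\<forall>b\<in>{..<N}. \<delta> (enc b) \<in> carrier X" using encS \<delta>X by simp
    show "\<forall>g\<in>carrier G. \<forall>b'\<in>{..<N}. \<forall>b\<in>{..<N}. ?u g b' b \<noteq> 0 \<longrightarrow> \<delta> (enc b') = act g (\<delta> (enc b))"
      by (rule P1)
    show "\<forall>g\<in>carrier G. \<exists>v. (\<forall>b'\<in>{..<N}. \<forall>b\<in>{..<N}. v b' b \<noteq> 0 \<longrightarrow> act g (\<delta> (enc b')) = \<delta> (enc b)) \<and>
          (\<forall>i\<in>{..<N}. \<forall>k\<in>{..<N}. mat_comp {..<N} v (?u g) i k = (if i = k then 1 else 0)) \<and>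
          (\<forall>i\<in>{..<N}. \<forall>k\<in>{..<N}. mat_comp {..<N} (?u g) v i k = (if i = k then 1 else 0))"
      using P2 by (intro ballI) 
    show "\<forall>g\<in>carrier G. \<forall>h\<in>carrier G. \<forall>b'\<in>{..<N}. \<forall>b\<in>{..<N}.
         ?u (g \<otimes>\<^bsub>G\<^esub> h) b' b = mat_comp {..<N} (?u g) (?u h) b' b * \<gamma> g h (\<delta> (enc b))"
      using P3 by simp
  qed
qed


lemma iso_from_trivial:
  fixes G :: "('g, 'a) monoid_scheme" and X :: "('x, 'b) monoid_scheme" and deg :: "nat \<Rightarrow> 'x"
    and u :: "'g \<Rightarrow> nat \<Rightarrow> nat \<Rightarrow> 'k::field"
  assumes finB: "finite B" and D: "\<And>a. a \<in> B \<Longrightarrow> deg a = \<one>\<^bsub>X\<^esub>"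
    and U: "\<And>g a1 a2. g \<in> carrier G \<Longrightarrow> a1 \<in> B \<Longrightarrow> a2 \<in> B \<Longrightarrow> u g a1 a2 = (if a1 = a2 then 1 else 0)"
  shows "eq_iso G (B, deg, u) (unit_sum X (card B) :: ('g, 'x, 'k) eq_obj)"
proof -
  let ?n = "card B"
  obtain e where e0: "bij_betw e {0..<?n} B" using ex_bij_betw_nat_finite[OF finB] by blast
  have e: "bij_betw e {..<?n} B" using e0 by (simp add: atLeast0LessThan)
  have eB: "\<And>j. j < ?n \<Longrightarrow> e j \<in> B" using e by (auto simp: bij_betw_def)
  have einj: "\<And>i j. i < ?n \<Longrightarrow> j < ?n \<Longrightarrow> e i = e j \<Longrightarrow> i = j"
    using e by (auto simp: bij_betw_def inj_on_def)
  have idx: "\<And>t. t \<in> B \<Longrightarrow> e (inv_into {..<?n} e t) = t"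
    using e by (meson bij_betw_inv_into_right)
  let ?f = "\<lambda>i b. if e i = b then 1 else (0::'k)"
  let ?f' = "\<lambda>b i. if e i = b then 1 else (0::'k)"
  let ?I = "\<lambda>(g::'g) i j. if i = j then 1 else (0::'k)"
  have m1: "is_eq_mor G (B, deg, u) ({..<?n}, \<lambda>_. \<one>\<^bsub>X\<^esub>, ?I) ?f"
    unfolding is_eq_mor_def prod.case
  proof (intro conjI ballI impI)
    fix b' b assume "b \<in> B" then show "\<one>\<^bsub>X\<^esub> = deg b" using D by simp
  next
    fix g b' b assume g: "g \<in> carrier G" and b': "b' \<in> {..<?n}" and b: "b \<in> B"
    have "mat_comp B ?f (u g) b' b = (\<Sum>j\<in>B. ?f b' j * (if j = b then 1 else 0))"
      unfolding mat_comp_def using U[OF g _ b] by (intro sum.cong refl) simp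
    also have "\<dots> = ?f b' b" using sum_if_eq2[OF finB b] .
    also have "\<dots> = (\<Sum>j\<in>{..<?n}. (if b' = j then 1 else 0) * ?f j b)" using sum_if_eq[OF finite_lessThan b', where M="?f" and k=b] by simp
    finally show "mat_comp B ?f (u g) b' b = mat_comp {..<?n} (?I g) ?f b' b" by (simp add: mat_comp_def)
  qed
  have m2: "is_eq_mor G ({..<?n}, \<lambda>_. \<one>\<^bsub>X\<^esub>, ?I) (B, deg, u) ?f'"
    unfolding is_eq_mor_def prod.case
  proof (intro conjI ballI impI)
    fix b' b assume "b' \<in> B" then show "deg b' = \<one>\<^bsub>X\<^esub>" using D by simp
  next
    fix g b' b assume g: "g \<in> carrier G" and b': "b' \<in> B" and b: "b \<in> {..<?n}"
    have "mat_comp {..<?n} ?f' (?I g) b' b = ?f' b' b"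
      using sum_if_eq2[OF finite_lessThan b, of ?f' b'] by (simp add: mat_comp_def)
    also have "\<dots> = (\<Sum>j\<in>B. (if b' = j then 1 else 0) * ?f' j b)" using sum_if_eq[OF finB b', where M="?f'" and k=b] by simp
    also have "\<dots> = mat_comp B (u g) ?f' b' b"
      unfolding mat_comp_def using U[OF g b'] by (intro sum.cong refl) simp
    finally show "mat_comp {..<?n} ?f' (?I g) b' b = mat_comp B (u g) ?f' b' b" .
  qed
  have i1: "mat_comp {..<?n} ?f' ?f i k = (if i = k then 1 else 0)" if i: "i \<in> B" and k: "k \<in> B" for i k
  proof -
    have "mat_comp {..<?n} ?f' ?f i k = (\<Sum>j<?n. if e j = i then (if e j = k then 1 else 0) else 0)"
      unfolding mat_comp_def by (intro sum.cong refl) simp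
    also have "\<dots> = (if e (inv_into {..<?n} e i) = k then 1 else 0)"
      using sum_enc[OF e i, of "\<lambda>j. if e j = k then 1 else 0"] .
    finally show ?thesis using idx[OF i] by simp
  qed
  have i2: "mat_comp B ?f ?f' i k = (if i = k then 1 else 0)" if i: "i < ?n" and k: "k < ?n" for i k
  proof -
    have "mat_comp B ?f ?f' i k = (\<Sum>b\<in>B. if e i = b then (if e k = b then 1 else 0) else 0)"
      unfolding mat_comp_def by (intro sum.cong refl) simp
    also have "\<dots> = (if e k = e i then 1 else 0)" using finB eB[OF i] by simp
    also have "\<dots> = (if i = k then 1 else 0)" using einj[OF i k] by auto
    finally show ?thesis .
  qed
  show ?thesis unfolding eq_iso_def unit_sum_def fst_conv
    apply (rule exI[where x="?f"], rule exI[where x="?f'"])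
    using m1 m2 i1 i2 by (simp add: unit_sum_def)
qed

locale qac =
  fixes G :: "('g, 'a) monoid_scheme" and X :: "('x, 'b) monoid_scheme"
    and act :: "'g \<Rightarrow> 'x \<Rightarrow> 'x" and d :: "'x \<Rightarrow> 'g"
    and \<omega> :: "'x \<Rightarrow> 'x \<Rightarrow> 'x \<Rightarrow> 'k::field"
    and \<gamma> :: "'g \<Rightarrow> 'g \<Rightarrow> 'x \<Rightarrow> 'k" and \<mu> :: "'g \<Rightarrow> 'x \<Rightarrow> 'x \<Rightarrow> 'k" and c :: "'x \<Rightarrow> 'x \<Rightarrow> 'k"
  assumes fcm: "finite_crossed_module G X act d"
    and qa: "quasi_abelian_3cocycle G X act d \<omega> \<gamma> \<mu> c"
    and nc: "normalized_cocycle G X \<omega> \<gamma> \<mu> c"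
begin

lemma grpG: "group G" and grpX: "group X" and finG: "finite (carrier G)" and finX: "finite (carrier X)"
  using fcm by (simp_all add: finite_crossed_module_def)

lemma actX: "g \<in> carrier G \<Longrightarrow> x \<in> carrier X \<Longrightarrow> act g x \<in> carrier X"
  and act1: "x \<in> carrier X \<Longrightarrow> act \<one>\<^bsub>G\<^esub> x = x"
  and act_mult: "g \<in> carrier G \<Longrightarrow> h \<in> carrier G \<Longrightarrow> x \<in> carrier X \<Longrightarrow> act (g \<otimes>\<^bsub>G\<^esub> h) x = act g (act h x)"
  and act_hom: "g \<in> carrier G \<Longrightarrow> x \<in> carrier X \<Longrightarrow> y \<in> carrier X \<Longrightarrow> act g (x \<otimes>\<^bsub>X\<^esub> y) = act g x \<otimes>\<^bsub>X\<^esub> act g y"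
  and d_hom: "d \<in> hom X G"
  and d_conj: "x \<in> carrier X \<Longrightarrow> y \<in> carrier X \<Longrightarrow> act (d x) y = x \<otimes>\<^bsub>X\<^esub> y \<otimes>\<^bsub>X\<^esub> inv\<^bsub>X\<^esub> x"
  and d_act: "g \<in> carrier G \<Longrightarrow> x \<in> carrier X \<Longrightarrow> d (act g x) = g \<otimes>\<^bsub>G\<^esub> d x \<otimes>\<^bsub>G\<^esub> inv\<^bsub>G\<^esub> g"
  using fcm by (simp_all add: finite_crossed_module_def)

lemma dX: "x \<in> carrier X \<Longrightarrow> d x \<in> carrier G"
  using d_hom by (simp add: hom_def Pi_def)

lemma d_mult: "x \<in> carrier X \<Longrightarrow> y \<in> carrier X \<Longrightarrow> d (x \<otimes>\<^bsub>X\<^esub> y) = d x \<otimes>\<^bsub>G\<^esub> d y"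
  using d_hom by (simp add: hom_def)

lemma ghom: "group_hom X G d"
  using grpX grpG d_hom by (simp add: group_hom_def group_hom_axioms_def)

lemma d_one: "d \<one>\<^bsub>X\<^esub> = \<one>\<^bsub>G\<^esub>"
  using ghom by (simp add: group_hom.hom_one)

lemma d_inv: "x \<in> carrier X \<Longrightarrow> d (inv\<^bsub>X\<^esub> x) = inv\<^bsub>G\<^esub> d x"
  using ghom by (simp add: group_hom.hom_inv)

lemma om_nz: "x \<in> carrier X \<Longrightarrow> y \<in> carrier X \<Longrightarrow> z \<in> carrier X \<Longrightarrow> \<omega> x y z \<noteq> 0"
  and gam_nz: "g \<in> carrier G \<Longrightarrow> h \<in> carrier G \<Longrightarrow> x \<in> carrier X \<Longrightarrow> \<gamma> g h x \<noteq> 0"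
  and c_nz: "x \<in> carrier X \<Longrightarrow> y \<in> carrier X \<Longrightarrow> c x y \<noteq> 0"
  and gam_b: "g \<in> carrier G \<Longrightarrow> h \<in> carrier G \<Longrightarrow> k \<in> carrier G \<Longrightarrow> x \<in> carrier X \<Longrightarrow>
       \<gamma> h k x * \<gamma> g (h \<otimes>\<^bsub>G\<^esub> k) x = \<gamma> (g \<otimes>\<^bsub>G\<^esub> h) k x * \<gamma> g h (act k x)"
  and c_f: "x \<in> carrier X \<Longrightarrow> y \<in> carrier X \<Longrightarrow> z \<in> carrier X \<Longrightarrow>
       c (x \<otimes>\<^bsub>X\<^esub> y) z
         = (\<omega> x y z * \<omega> (x \<otimes>\<^bsub>X\<^esub> y \<otimes>\<^bsub>X\<^esub> z \<otimes>\<^bsub>X\<^esub> inv\<^bsub>X\<^esub> (x \<otimes>\<^bsub>X\<^esub> y)) x y)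
             / (\<omega> x (y \<otimes>\<^bsub>X\<^esub> z \<otimes>\<^bsub>X\<^esub> inv\<^bsub>X\<^esub> y) y * \<gamma> (d x) (d y) z)
           * c x (y \<otimes>\<^bsub>X\<^esub> z \<otimes>\<^bsub>X\<^esub> inv\<^bsub>X\<^esub> y) * c y z"
  and c_g: "x \<in> carrier X \<Longrightarrow> y \<in> carrier X \<Longrightarrow> z \<in> carrier X \<Longrightarrow>
       c x (y \<otimes>\<^bsub>X\<^esub> z)
         = \<omega> (x \<otimes>\<^bsub>X\<^esub> y \<otimes>\<^bsub>X\<^esub> inv\<^bsub>X\<^esub> x) x z
             / (\<omega> x y z * \<omega> (x \<otimes>\<^bsub>X\<^esub> y \<otimes>\<^bsub>X\<^esub> inv\<^bsub>X\<^esub> x) (x \<otimes>\<^bsub>X\<^esub> z \<otimes>\<^bsub>X\<^esub> inv\<^bsub>X\<^esub> x) x * \<mu> (d x) y z)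
           * c x y * c x z"
proof -
  note q = qa[unfolded quasi_abelian_3cocycle_def Let_def]
  show "x \<in> carrier X \<Longrightarrow> y \<in> carrier X \<Longrightarrow> z \<in> carrier X \<Longrightarrow> \<omega> x y z \<noteq> 0"
    using q[THEN conjunct1] by blast
  show "g \<in> carrier G \<Longrightarrow> h \<in> carrier G \<Longrightarrow> x \<in> carrier X \<Longrightarrow> \<gamma> g h x \<noteq> 0"
    using q[THEN conjunct2, THEN conjunct1] by blast
  show "x \<in> carrier X \<Longrightarrow> y \<in> carrier X \<Longrightarrow> c x y \<noteq> 0"
    using q[THEN conjunct2, THEN conjunct2, THEN conjunct2, THEN conjunct1] by blast
  show "g \<in> carrier G \<Longrightarrow> h \<in> carrier G \<Longrightarrow> k \<in> carrier G \<Longrightarrow> x \<in> carrier X \<Longrightarrow>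
       \<gamma> h k x * \<gamma> g (h \<otimes>\<^bsub>G\<^esub> k) x = \<gamma> (g \<otimes>\<^bsub>G\<^esub> h) k x * \<gamma> g h (act k x)"
    using q[THEN conjunct2, THEN conjunct2, THEN conjunct2, THEN conjunct2, THEN conjunct2, THEN conjunct1] by blast
  note q10 = q[THEN conjunct2, THEN conjunct2, THEN conjunct2, THEN conjunct2, THEN conjunct2,
      THEN conjunct2, THEN conjunct2, THEN conjunct2, THEN conjunct2]
  show "x \<in> carrier X \<Longrightarrow> y \<in> carrier X \<Longrightarrow> z \<in> carrier X \<Longrightarrow>
       c (x \<otimes>\<^bsub>X\<^esub> y) z
         = (\<omega> x y z * \<omega> (x \<otimes>\<^bsub>X\<^esub> y \<otimes>\<^bsub>X\<^esub> z \<otimes>\<^bsub>X\<^esub> inv\<^bsub>X\<^esub> (x \<otimes>\<^bsub>X\<^esub> y)) x y)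
             / (\<omega> x (y \<otimes>\<^bsub>X\<^esub> z \<otimes>\<^bsub>X\<^esub> inv\<^bsub>X\<^esub> y) y * \<gamma> (d x) (d y) z)
           * c x (y \<otimes>\<^bsub>X\<^esub> z \<otimes>\<^bsub>X\<^esub> inv\<^bsub>X\<^esub> y) * c y z"
    using q10[THEN conjunct1] by blast
  show "x \<in> carrier X \<Longrightarrow> y \<in> carrier X \<Longrightarrow> z \<in> carrier X \<Longrightarrow>
       c x (y \<otimes>\<^bsub>X\<^esub> z)
         = \<omega> (x \<otimes>\<^bsub>X\<^esub> y \<otimes>\<^bsub>X\<^esub> inv\<^bsub>X\<^esub> x) x z
             / (\<omega> x y z * \<omega> (x \<otimes>\<^bsub>X\<^esub> y \<otimes>\<^bsub>X\<^esub> inv\<^bsub>X\<^esub> x) (x \<otimes>\<^bsub>X\<^esub> z \<otimes>\<^bsub>X\<^esub> inv\<^bsub>X\<^esub> x) x * \<mu> (d x) y z)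
           * c x y * c x z"
    using q10[THEN conjunct2] by blast
qed

lemma gam_norm: "g \<in> carrier G \<Longrightarrow> h \<in> carrier G \<Longrightarrow> x \<in> carrier X \<Longrightarrow> g = \<one>\<^bsub>G\<^esub> \<or> h = \<one>\<^bsub>G\<^esub> \<or> x = \<one>\<^bsub>X\<^esub> \<Longrightarrow> \<gamma> g h x = 1"
  and mu_norm: "g \<in> carrier G \<Longrightarrow> x \<in> carrier X \<Longrightarrow> y \<in> carrier X \<Longrightarrow> g = \<one>\<^bsub>G\<^esub> \<or> x = \<one>\<^bsub>X\<^esub> \<or> y = \<one>\<^bsub>X\<^esub> \<Longrightarrow> \<mu> g x y = 1"
  and c_norm: "x \<in> carrier X \<Longrightarrow> y \<in> carrier X \<Longrightarrow> x = \<one>\<^bsub>X\<^esub> \<or> y = \<one>\<^bsub>X\<^esub> \<Longrightarrow> c x y = 1"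
proof -
  note q = nc[unfolded normalized_cocycle_def Let_def]
  show "g \<in> carrier G \<Longrightarrow> h \<in> carrier G \<Longrightarrow> x \<in> carrier X \<Longrightarrow> g = \<one>\<^bsub>G\<^esub> \<or> h = \<one>\<^bsub>G\<^esub> \<or> x = \<one>\<^bsub>X\<^esub> \<Longrightarrow> \<gamma> g h x = 1"
    using q[THEN conjunct2, THEN conjunct1] by blast
  show "g \<in> carrier G \<Longrightarrow> x \<in> carrier X \<Longrightarrow> y \<in> carrier X \<Longrightarrow> g = \<one>\<^bsub>G\<^esub> \<or> x = \<one>\<^bsub>X\<^esub> \<or> y = \<one>\<^bsub>X\<^esub> \<Longrightarrow> \<mu> g x y = 1"
    using q[THEN conjunct2, THEN conjunct2, THEN conjunct1] by blast
  show "x \<in> carrier X \<Longrightarrow> y \<in> carrier X \<Longrightarrow> x = \<one>\<^bsub>X\<^esub> \<or> y = \<one>\<^bsub>X\<^esub> \<Longrightarrow> c x y = 1"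
    using q[THEN conjunct2, THEN conjunct2, THEN conjunct2] by blast
qed

lemma c1l: "y \<in> carrier X \<Longrightarrow> c \<one>\<^bsub>X\<^esub> y = 1" and c1r: "y \<in> carrier X \<Longrightarrow> c y \<one>\<^bsub>X\<^esub> = 1"
  using c_norm grpX by (auto simp: group.is_monoid monoid.one_closed)

lemma oneG: "\<one>\<^bsub>G\<^esub> \<in> carrier G" and oneX: "\<one>\<^bsub>X\<^esub> \<in> carrier X"
  using grpG grpX by (simp_all add: group.is_monoid monoid.one_closed)

lemma obj_unit:
  assumes "is_eq_obj G X act \<gamma> (B, deg, u)" "i \<in> B" "k \<in> B"
  shows "u \<one>\<^bsub>G\<^esub> i k = (if i = k then 1 else 0)"
proof (rule eq_obj_unit[OF assms(1) grpG _ assms(2,3)])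
  have "\<forall>b\<in>B. deg b \<in> carrier X" using assms(1) by (simp add: is_eq_obj_def)
  then show "\<forall>b\<in>B. \<gamma> \<one>\<^bsub>G\<^esub> \<one>\<^bsub>G\<^esub> (deg b) = 1" using gam_norm oneG by blast
qed

lemma enc_G: obtains enc and N :: nat where "bij_betw enc {..<N} (carrier G)"
proof -
  obtain enc where "bij_betw enc {0..<card (carrier G)} (carrier G)"
    using ex_bij_betw_nat_finite[OF finG] by blast
  then show ?thesis using that by (simp add: atLeast0LessThan)
qed

lemma ind_obj:
  assumes z: "z \<in> carrier X" and bij: "bij_betw enc {..<N} (carrier G)"
  shows "is_eq_obj G X act \<gamma> ({..<N}, \<lambda>j. act (enc j) z,
           \<lambda>h i j. if enc i = h \<otimes>\<^bsub>G\<^esub> enc j then 1 / \<gamma> h (enc j) z else 0)"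
proof (rule monomial_obj[OF grpG bij, where p="\<lambda>h g. h \<otimes>\<^bsub>G\<^esub> g" and \<delta>="\<lambda>g. act g z"
      and lam="\<lambda>h g. 1 / \<gamma> h g z"])
  show "\<And>h s. h \<in> carrier G \<Longrightarrow> s \<in> carrier G \<Longrightarrow> h \<otimes>\<^bsub>G\<^esub> s \<in> carrier G"
    using grpG by (simp add: group.is_monoid monoid.m_closed)
  show "\<And>s. s \<in> carrier G \<Longrightarrow> \<one>\<^bsub>G\<^esub> \<otimes>\<^bsub>G\<^esub> s = s"
    using grpG by (simp add: group.is_monoid monoid.l_one)
  show "\<And>g h s. g \<in> carrier G \<Longrightarrow> h \<in> carrier G \<Longrightarrow> s \<in> carrier G \<Longrightarrow>
      g \<otimes>\<^bsub>G\<^esub> h \<otimes>\<^bsub>G\<^esub> s = g \<otimes>\<^bsub>G\<^esub> (h \<otimes>\<^bsub>G\<^esub> s)"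
    using grpG by (simp add: group.is_monoid monoid.m_assoc)
  show "\<And>s. s \<in> carrier G \<Longrightarrow> act s z \<in> carrier X" using actX z by simp
  show "\<And>h s. h \<in> carrier G \<Longrightarrow> s \<in> carrier G \<Longrightarrow> act (h \<otimes>\<^bsub>G\<^esub> s) z = act h (act s z)"
    using act_mult z by simp
  show "\<And>h s. h \<in> carrier G \<Longrightarrow> s \<in> carrier G \<Longrightarrow> 1 / \<gamma> h s z \<noteq> 0"
    using gam_nz z by simp
  show "1 / \<gamma> (g \<otimes>\<^bsub>G\<^esub> h) s z = 1 / \<gamma> g (h \<otimes>\<^bsub>G\<^esub> s) z * (1 / \<gamma> h s z) * \<gamma> g h (act s z)"
    if g: "g \<in> carrier G" and h: "h \<in> carrier G" and s: "s \<in> carrier G" for g h s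
  proof -
    have hs: "h \<otimes>\<^bsub>G\<^esub> s \<in> carrier G" "g \<otimes>\<^bsub>G\<^esub> h \<in> carrier G"
      using grpG g h s by (simp_all add: group.is_monoid monoid.m_closed)
    have e: "\<gamma> h s z * \<gamma> g (h \<otimes>\<^bsub>G\<^esub> s) z = \<gamma> (g \<otimes>\<^bsub>G\<^esub> h) s z * \<gamma> g h (act s z)"
      using gam_b[OF g h s z] .
    have nz: "\<gamma> h s z \<noteq> 0" "\<gamma> g (h \<otimes>\<^bsub>G\<^esub> s) z \<noteq> 0" "\<gamma> (g \<otimes>\<^bsub>G\<^esub> h) s z \<noteq> 0"
        "\<gamma> g h (act s z) \<noteq> 0"
      using gam_nz hs g h s z actX by auto
    show ?thesis using e nz by (simp add: field_simps)
  qed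
qed

lemma transp_eq:
  assumes Y: "is_eq_obj G X act \<gamma> (B, deg, u)"
    and hyp: "\<forall>Z. is_eq_obj G X act \<gamma> Z \<longrightarrow> double_braid_id d c (B, deg, u) Z"
    and z: "z \<in> carrier X" and a1: "a1 \<in> B" and a2: "a2 \<in> B"
  shows "c z (deg a2) * u (d z) a1 a2 * (c (deg a2) z * (if d (deg a2) = \<one>\<^bsub>G\<^esub> then 1 else 0))
          = (if a1 = a2 then 1 else 0)"
proof -
  obtain enc and N :: nat where bij: "bij_betw enc {..<N} (carrier G)" by (rule enc_G)
  let ?uZ = "\<lambda>h i j. if enc i = h \<otimes>\<^bsub>G\<^esub> enc j then 1 / \<gamma> h (enc j) z else 0"
  have obj: "is_eq_obj G X act \<gamma> ({..<N}, \<lambda>j. act (enc j) z, ?uZ)" by (rule ind_obj[OF z bij])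
  have finB: "finite B" using Y by (simp add: is_eq_obj_def)
  have db: "double_braid_id d c (B, deg, u) ({..<N}, \<lambda>j. act (enc j) z, ?uZ)" using hyp obj by blast
  let ?i0 = "inv_into {..<N} enc \<one>\<^bsub>G\<^esub>"
  have i0: "?i0 < N" "enc ?i0 = \<one>\<^bsub>G\<^esub>"
    using bij oneG by (metis bij_betw_def bij_betw_inv_into_right inv_into_into lessThan_iff)+
  have degX: "deg a2 \<in> carrier X" using Y a2 by (simp add: is_eq_obj_def)
  have dd: "d (deg a2) \<in> carrier G" using dX degX .
  have uz: "?uZ (d (deg a2)) ?i0 ?i0 = (if d (deg a2) = \<one>\<^bsub>G\<^esub> then 1 else 0)"
  proof -
    have "d (deg a2) \<otimes>\<^bsub>G\<^esub> \<one>\<^bsub>G\<^esub> = d (deg a2)" using grpG dd by (simp add: group.is_monoid monoid.r_one)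
    moreover have "\<gamma> (d (deg a2)) \<one>\<^bsub>G\<^esub> z = 1" using gam_norm dd oneG z by blast
    ultimately show ?thesis using i0 by auto
  qed
  have az: "act \<one>\<^bsub>G\<^esub> z = z" using act1 z .
  have "c (act (enc ?i0) z) (deg a2) * u (d (act (enc ?i0) z)) a1 a2 *
        (c (deg a2) (act (enc ?i0) z) * ?uZ (d (deg a2)) ?i0 ?i0) = (if a1 = a2 \<and> ?i0 = ?i0 then 1 else 0)"
    using db[unfolded DB_iff[OF finB finite_lessThan]] a1 a2 i0 by blast
  then show ?thesis using i0 az uz by simp
qed

lemma backward:
  assumes surj: "d ` carrier X = carrier G" and nd: "nondegenerate_cocycle G X d c"
  shows "eq_cat_nondegenerate G X act d \<gamma> c"
  unfolding eq_cat_nondegenerate_def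
proof (intro allI impI)
  fix Y assume Y: "is_eq_obj G X act \<gamma> Y"
    and tr: "\<forall>Z. is_eq_obj G X act \<gamma> Z \<longrightarrow> double_braid_id d c Y Z \<and> double_braid_id d c Z Y"
  obtain B deg u where Yd: "Y = (B, deg, u)" by (cases Y) auto
  have obj: "is_eq_obj G X act \<gamma> (B, deg, u)" using Y Yd by simp
  have hyp: "\<forall>Z. is_eq_obj G X act \<gamma> Z \<longrightarrow> double_braid_id d c (B, deg, u) Z" using tr Yd by simp
  have finB: "finite B" using obj by (simp add: is_eq_obj_def)
  have degX: "\<And>a. a \<in> B \<Longrightarrow> deg a \<in> carrier X" using obj by (simp add: is_eq_obj_def)
  note T = transp_eq[OF obj hyp]
  have u1: "\<And>a. a \<in> B \<Longrightarrow> u \<one>\<^bsub>G\<^esub> a a = 1" using obj_unit[OF obj] by simp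
  have K: "d (deg a) = \<one>\<^bsub>G\<^esub>" if a: "a \<in> B" for a
  proof -
    have "c \<one>\<^bsub>X\<^esub> (deg a) * u (d \<one>\<^bsub>X\<^esub>) a a * (c (deg a) \<one>\<^bsub>X\<^esub> * (if d (deg a) = \<one>\<^bsub>G\<^esub> then 1 else 0)) = 1"
      using T[OF oneX a a] by simp
    then have "(if d (deg a) = \<one>\<^bsub>G\<^esub> then 1 else (0::'k)) = 1"
      using c1l c1r degX[OF a] d_one u1[OF a] by simp
    then show ?thesis by (cases "d (deg a) = \<one>\<^bsub>G\<^esub>") simp_all
  qed
  have D1: "deg a = \<one>\<^bsub>X\<^esub>" if a: "a \<in> B" for a
  proof -
    have "\<forall>z\<in>{x \<in> carrier X. d x = \<one>\<^bsub>G\<^esub>}. c z (deg a) * c (deg a) z = 1"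
    proof
      fix z assume "z \<in> {x \<in> carrier X. d x = \<one>\<^bsub>G\<^esub>}"
      then have z: "z \<in> carrier X" "d z = \<one>\<^bsub>G\<^esub>" by auto
      have "c z (deg a) * u (d z) a a * (c (deg a) z * (if d (deg a) = \<one>\<^bsub>G\<^esub> then 1 else 0)) = 1"
        using T[OF z(1) a a] by simp
      then show "c z (deg a) * c (deg a) z = 1" using z K[OF a] u1[OF a] by simp
    qed
    moreover have "deg a \<in> {x \<in> carrier X. d x = \<one>\<^bsub>G\<^esub>}" using degX[OF a] K[OF a] by simp
    ultimately show ?thesis using nd unfolding nondegenerate_cocycle_def Let_def by blast
  qed
  have U: "u g a1 a2 = (if a1 = a2 then 1 else 0)" if g: "g \<in> carrier G" and a1: "a1 \<in> B" and a2: "a2 \<in> B" for g a1 a2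
  proof -
    obtain z where z: "z \<in> carrier X" "g = d z" using g surj by blast
    have "c z (deg a2) * u (d z) a1 a2 * (c (deg a2) z * (if d (deg a2) = \<one>\<^bsub>G\<^esub> then 1 else 0)) = (if a1 = a2 then 1 else 0)"
      using T[OF z(1) a1 a2] .
    then show ?thesis using z D1[OF a2] d_one c1l c1r by simp
  qed
  show "\<exists>n. eq_iso G Y (unit_sum X n)"
    unfolding Yd by (rule exI, rule iso_from_trivial[OF finB D1 U])
qed


lemma act_one: "h \<in> carrier G \<Longrightarrow> act h \<one>\<^bsub>X\<^esub> = \<one>\<^bsub>X\<^esub>"
proof -
  assume h: "h \<in> carrier G"
  interpret X: group X by (rule grpX)
  have a: "act h \<one>\<^bsub>X\<^esub> \<in> carrier X" using actX[OF h oneX] .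
  have "act h \<one>\<^bsub>X\<^esub> \<otimes>\<^bsub>X\<^esub> act h \<one>\<^bsub>X\<^esub> = act h \<one>\<^bsub>X\<^esub>"
    using act_hom[OF h oneX oneX] a by simp
  then show ?thesis using X.l_cancel_one[OF a a] by simp
qed

lemma forward_surj:
  assumes nd: "eq_cat_nondegenerate G X act d \<gamma> c"
  shows "d ` carrier X = carrier G"
proof (rule ccontr)
  interpret G: group G by (rule grpG)
  assume ne: "d ` carrier X \<noteq> carrier G"
  let ?D = "d ` carrier X"
  have DG: "?D \<subseteq> carrier G" using dX by auto
  obtain g0 where g0: "g0 \<in> carrier G" "g0 \<notin> ?D" using ne DG by blast
  define cos where "cos a = (\<lambda>k. a \<otimes>\<^bsub>G\<^esub> k) ` ?D" for a
  define p where "p h C = (\<lambda>y. h \<otimes>\<^bsub>G\<^esub> y) ` C" for h C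
  define S where "S = cos ` carrier G"
  have p_cos: "p h (cos a) = cos (h \<otimes>\<^bsub>G\<^esub> a)" if h: "h \<in> carrier G" and a: "a \<in> carrier G" for h a
  proof -
    have "p h (cos a) = (\<lambda>k. h \<otimes>\<^bsub>G\<^esub> (a \<otimes>\<^bsub>G\<^esub> k)) ` ?D" unfolding p_def cos_def by (simp add: image_image)
    also have "\<dots> = (\<lambda>k. (h \<otimes>\<^bsub>G\<^esub> a) \<otimes>\<^bsub>G\<^esub> k) ` ?D"
      using DG h a by (intro image_cong refl) (auto simp: G.m_assoc)
    finally show ?thesis unfolding cos_def .
  qed
  have cos_sub: "cos (d z \<otimes>\<^bsub>G\<^esub> a) \<subseteq> cos a" if z: "z \<in> carrier X" and a: "a \<in> carrier G" for z a
  proof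
    fix y assume "y \<in> cos (d z \<otimes>\<^bsub>G\<^esub> a)"
    then obtain k where k: "k \<in> carrier X" "y = d z \<otimes>\<^bsub>G\<^esub> a \<otimes>\<^bsub>G\<^esub> d k" unfolding cos_def by auto
    let ?w = "act (inv\<^bsub>G\<^esub> a) z \<otimes>\<^bsub>X\<^esub> k"
    have ia: "inv\<^bsub>G\<^esub> a \<in> carrier G" using a by simp
    have wX: "?w \<in> carrier X" using actX[OF ia z] k grpX by (simp add: group.is_monoid monoid.m_closed)
    have dw: "d ?w = inv\<^bsub>G\<^esub> a \<otimes>\<^bsub>G\<^esub> d z \<otimes>\<^bsub>G\<^esub> a \<otimes>\<^bsub>G\<^esub> d k"
      using d_mult[OF actX[OF ia z] k(1)] d_act[OF ia z] a by simp
    have "y = a \<otimes>\<^bsub>G\<^esub> d ?w"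
      using k dw a dX[OF z] dX[OF k(1)] by (simp add: G.m_assoc[symmetric] G.r_inv)
    then show "y \<in> cos a" using wX unfolding cos_def by auto
  qed
  have cos_d: "cos (d z \<otimes>\<^bsub>G\<^esub> a) = cos a" if z: "z \<in> carrier X" and a: "a \<in> carrier G" for z a
  proof
    show "cos (d z \<otimes>\<^bsub>G\<^esub> a) \<subseteq> cos a" by (rule cos_sub[OF z a])
    have iz: "inv\<^bsub>X\<^esub> z \<in> carrier X" using z grpX by (simp add: group.inv_closed)
    have dza: "d z \<otimes>\<^bsub>G\<^esub> a \<in> carrier G" using dX[OF z] a by simp
    have "d (inv\<^bsub>X\<^esub> z) \<otimes>\<^bsub>G\<^esub> (d z \<otimes>\<^bsub>G\<^esub> a) = a"
      using d_inv[OF z] dX[OF z] a by (simp add: G.m_assoc[symmetric] G.l_inv)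
    then show "cos a \<subseteq> cos (d z \<otimes>\<^bsub>G\<^esub> a)" using cos_sub[OF iz dza] by simp
  qed
  have finS: "finite S" unfolding S_def using finG by simp
  obtain enc where e0: "bij_betw enc {0..<card S} S" using ex_bij_betw_nat_finite[OF finS] by blast
  have bij: "bij_betw enc {..<card S} S" using e0 by (simp add: atLeast0LessThan)
  let ?N = "card S"
  let ?u = "\<lambda>h i j. if enc i = p h (enc j) then 1 else (0::'k)"
  have objQ: "is_eq_obj G X act \<gamma> ({..<?N}, \<lambda>j. (\<lambda>_. \<one>\<^bsub>X\<^esub>) (enc j), \<lambda>h i j. if enc i = p h (enc j) then (\<lambda>_ _. 1::'k) h (enc j) else 0)"
  proof (rule monomial_obj[OF grpG bij])
    show "\<And>h s. h \<in> carrier G \<Longrightarrow> s \<in> S \<Longrightarrow> p h s \<in> S" unfolding S_def using p_cos by auto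
    show "\<And>s. s \<in> S \<Longrightarrow> p \<one>\<^bsub>G\<^esub> s = s" unfolding S_def using p_cos by auto
    show "\<And>g h s. g \<in> carrier G \<Longrightarrow> h \<in> carrier G \<Longrightarrow> s \<in> S \<Longrightarrow> p (g \<otimes>\<^bsub>G\<^esub> h) s = p g (p h s)"
      unfolding S_def using p_cos by (auto simp: G.m_assoc)
    show "\<And>s. s \<in> S \<Longrightarrow> \<one>\<^bsub>X\<^esub> \<in> carrier X" using oneX by simp
    show "\<And>h s. h \<in> carrier G \<Longrightarrow> s \<in> S \<Longrightarrow> \<one>\<^bsub>X\<^esub> = act h \<one>\<^bsub>X\<^esub>" using act_one by simp
    show "\<And>h s. h \<in> carrier G \<Longrightarrow> s \<in> S \<Longrightarrow> (1::'k) \<noteq> 0" by simp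
    show "\<And>g h s. g \<in> carrier G \<Longrightarrow> h \<in> carrier G \<Longrightarrow> s \<in> S \<Longrightarrow> (1::'k) = 1 * 1 * \<gamma> g h \<one>\<^bsub>X\<^esub>"
      using gam_norm oneX by simp
  qed
  then have objQ': "is_eq_obj G X act \<gamma> ({..<?N}, \<lambda>_. \<one>\<^bsub>X\<^esub>, ?u)" by simp
  have encS: "\<And>j. j < ?N \<Longrightarrow> enc j \<in> S" using bij by (auto simp: bij_betw_def)
  have einj: "\<And>i j. i < ?N \<Longrightarrow> j < ?N \<Longrightarrow> enc i = enc j \<Longrightarrow> i = j"
    using bij by (auto simp: bij_betw_def inj_on_def)
  have ud: "?u (d z) a1 a2 = (if a1 = a2 then 1 else 0)" if z: "z \<in> carrier X" and a1: "a1 < ?N" and a2: "a2 < ?N" for z a1 a2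
  proof -
    obtain a where a: "a \<in> carrier G" "enc a2 = cos a" using encS[OF a2] unfolding S_def by auto
    have "p (d z) (enc a2) = enc a2" using a p_cos[OF dX[OF z] a(1)] cos_d[OF z a(1)] by simp
    then show ?thesis using einj[OF a1 a2] by auto
  qed
  have transp: "double_braid_id d c ({..<?N}, \<lambda>_. \<one>\<^bsub>X\<^esub>, ?u) Z \<and> double_braid_id d c Z ({..<?N}, \<lambda>_. \<one>\<^bsub>X\<^esub>, ?u)"
    if Z: "is_eq_obj G X act \<gamma> Z" for Z
  proof -
    obtain BZ dZ uZ where Zd: "Z = (BZ, dZ, uZ)" by (cases Z) auto
    have objZ: "is_eq_obj G X act \<gamma> (BZ, dZ, uZ)" using Z Zd by simp
    have finZ: "finite BZ" and dZX: "\<And>b. b \<in> BZ \<Longrightarrow> dZ b \<in> carrier X" using objZ by (auto simp: is_eq_obj_def)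
    have uZ1: "\<And>i k. i \<in> BZ \<Longrightarrow> k \<in> BZ \<Longrightarrow> uZ (d \<one>\<^bsub>X\<^esub>) i k = (if i = k then 1 else 0)"
      using obj_unit[OF objZ] d_one by simp
    have A: "double_braid_id d c ({..<?N}, \<lambda>_. \<one>\<^bsub>X\<^esub>, ?u) (BZ, dZ, uZ)"
      unfolding DB_iff[OF finite_lessThan finZ]
    proof (intro ballI)
      fix a1 b1 a2 b2 assume a1: "a1 \<in> {..<?N}" and b1: "b1 \<in> BZ" and a2: "a2 \<in> {..<?N}" and b2: "b2 \<in> BZ"
      show "c (dZ b1) \<one>\<^bsub>X\<^esub> * ?u (d (dZ b1)) a1 a2 * (c \<one>\<^bsub>X\<^esub> (dZ b2) * uZ (d \<one>\<^bsub>X\<^esub>) b1 b2) =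
            (if a1 = a2 \<and> b1 = b2 then 1 else 0)"
        using ud[OF dZX[OF b1]] a1 a2 uZ1[OF b1 b2] c1l c1r dZX b1 b2 by simp
    qed
    have B: "double_braid_id d c (BZ, dZ, uZ) ({..<?N}, \<lambda>_. \<one>\<^bsub>X\<^esub>, ?u)"
      unfolding DB_iff[OF finZ finite_lessThan]
    proof (intro ballI)
      fix a1 b1 a2 b2 assume a1: "a1 \<in> BZ" and b1: "b1 \<in> {..<?N}" and a2: "a2 \<in> BZ" and b2: "b2 \<in> {..<?N}"
      show "c \<one>\<^bsub>X\<^esub> (dZ a2) * uZ (d \<one>\<^bsub>X\<^esub>) a1 a2 * (c (dZ a2) \<one>\<^bsub>X\<^esub> * ?u (d (dZ a2)) b1 b2) =
            (if a1 = a2 \<and> b1 = b2 then 1 else 0)"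
        using ud[OF dZX[OF a2]] b1 b2 uZ1[OF a1 a2] c1l c1r dZX a1 a2 by simp
    qed
    show ?thesis using A B Zd by simp
  qed
  obtain n where iso: "eq_iso G ({..<?N}, \<lambda>_. \<one>\<^bsub>X\<^esub>, ?u) (unit_sum X n)"
    using nd objQ' transp unfolding eq_cat_nondegenerate_def by blast
  have triv: "\<forall>g\<in>carrier G. \<forall>i\<in>{..<?N}. \<forall>k\<in>{..<?N}. ?u g i k = (if i = k then 1 else 0)"
    using iso_unit_sum[OF iso finite_lessThan] by blast
  have c1S: "cos \<one>\<^bsub>G\<^esub> \<in> S" unfolding S_def by simp
  let ?i = "inv_into {..<?N} enc (cos \<one>\<^bsub>G\<^esub>)"
  have i: "?i < ?N" "enc ?i = cos \<one>\<^bsub>G\<^esub>"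
    using bij c1S by (metis bij_betw_def bij_betw_inv_into_right inv_into_into lessThan_iff)+
  have "?u g0 ?i ?i = 1" using triv g0(1) i(1) by simp
  then have eq: "cos \<one>\<^bsub>G\<^esub> = p g0 (cos \<one>\<^bsub>G\<^esub>)" using i(2) by (cases "cos \<one>\<^bsub>G\<^esub> = p g0 (cos \<one>\<^bsub>G\<^esub>)") simp_all
  have "p g0 (cos \<one>\<^bsub>G\<^esub>) = cos g0" using p_cos[OF g0(1) G.one_closed] g0(1) by simp
  moreover have "g0 \<in> cos g0" unfolding cos_def using g0(1) d_one oneX by (auto intro!: image_eqI[where x="\<one>\<^bsub>G\<^esub>"] image_eqI[where x="\<one>\<^bsub>X\<^esub>"])
  moreover have "cos \<one>\<^bsub>G\<^esub> \<subseteq> ?D" unfolding cos_def using DG by auto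
  ultimately show False using eq g0(2) by auto
qed


lemma forward_nd:
  assumes nd: "eq_cat_nondegenerate G X act d \<gamma> c" and surj: "d ` carrier X = carrier G"
  shows "nondegenerate_cocycle G X d c"
  unfolding nondegenerate_cocycle_def Let_def
proof (intro ballI impI)
  interpret X: group X by (rule grpX)
  interpret G: group G by (rule grpG)
  fix x assume xK: "x \<in> {x \<in> carrier X. d x = \<one>\<^bsub>G\<^esub>}"
    and rad: "\<forall>y\<in>{x \<in> carrier X. d x = \<one>\<^bsub>G\<^esub>}. c y x * c x y = 1"
  show "x = \<one>\<^bsub>X\<^esub>"
  proof (rule ccontr)
    assume xne: "x \<noteq> \<one>\<^bsub>X\<^esub>"
    have xX: "x \<in> carrier X" and dx: "d x = \<one>\<^bsub>G\<^esub>" using xK by auto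
    have central: "x \<otimes>\<^bsub>X\<^esub> y \<otimes>\<^bsub>X\<^esub> inv\<^bsub>X\<^esub> x = y" if y: "y \<in> carrier X" for y
      using d_conj[OF xX y] dx act1[OF y] by simp
    have comm: "x \<otimes>\<^bsub>X\<^esub> v = v \<otimes>\<^bsub>X\<^esub> x" if v: "v \<in> carrier X" for v
    proof -
      have "x \<otimes>\<^bsub>X\<^esub> v = (x \<otimes>\<^bsub>X\<^esub> v \<otimes>\<^bsub>X\<^esub> inv\<^bsub>X\<^esub> x) \<otimes>\<^bsub>X\<^esub> x"
        using xX v by (simp add: X.m_assoc X.l_inv)
      then show ?thesis using central[OF v] by simp
    qed
    have conjx: "v \<otimes>\<^bsub>X\<^esub> x \<otimes>\<^bsub>X\<^esub> inv\<^bsub>X\<^esub> v = x" if v: "v \<in> carrier X" for v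
    proof -
      have "v \<otimes>\<^bsub>X\<^esub> x \<otimes>\<^bsub>X\<^esub> inv\<^bsub>X\<^esub> v = x \<otimes>\<^bsub>X\<^esub> v \<otimes>\<^bsub>X\<^esub> inv\<^bsub>X\<^esub> v" using comm[OF v] by simp
      also have "\<dots> = x" using xX v by (simp add: X.m_assoc X.r_inv)
      finally show ?thesis .
    qed
    have actx: "act g x = x" if g: "g \<in> carrier G" for g
    proof -
      obtain v where v: "v \<in> carrier X" "g = d v" using g surj by blast
      show ?thesis using d_conj[OF v(1) xX] conjx[OF v(1)] v by simp
    qed
    define \<beta> where "\<beta> z = c z x * c x z" for z
    have \<beta>nz: "\<beta> z \<noteq> 0" if "z \<in> carrier X" for z using c_nz that xX by (simp add: \<beta>_def)
    have \<beta>mult: "\<beta> (z \<otimes>\<^bsub>X\<^esub> w) * \<gamma> (d z) (d w) x = \<beta> z * \<beta> w"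
      if z: "z \<in> carrier X" and w: "w \<in> carrier X" for z w
    proof -
      have zw: "z \<otimes>\<^bsub>X\<^esub> w \<in> carrier X" using z w by simp
      have f: "c (z \<otimes>\<^bsub>X\<^esub> w) x = (\<omega> z w x * \<omega> x z w) / (\<omega> z x w * \<gamma> (d z) (d w) x) * c z x * c w x"
        using c_f[OF z w xX] conjx[OF zw] conjx[OF w] by simp
      have g: "c x (z \<otimes>\<^bsub>X\<^esub> w) = \<omega> z x w / (\<omega> x z w * \<omega> z w x * 1) * c x z * c x w"
        using c_g[OF xX z w] central[OF z] central[OF w] dx mu_norm[OF oneG z w] by simp
      have nz: "\<omega> z w x \<noteq> 0" "\<omega> x z w \<noteq> 0" "\<omega> z x w \<noteq> 0" "\<gamma> (d z) (d w) x \<noteq> 0"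
        using om_nz gam_nz dX z w xX by auto
      show ?thesis unfolding \<beta>_def f g using nz by (simp add: field_simps)
    qed
    define lam where "lam g = 1 / \<beta> (SOME z. z \<in> carrier X \<and> d z = g)" for g
    have lam_d: "lam (d z) = 1 / \<beta> z" if z: "z \<in> carrier X" for z
    proof -
      define z' where "z' = (SOME z'. z' \<in> carrier X \<and> d z' = d z)"
      have z': "z' \<in> carrier X" "d z' = d z" unfolding z'_def using someI[of "\<lambda>z'. z' \<in> carrier X \<and> d z' = d z" z] z by auto
      define k where "k = inv\<^bsub>X\<^esub> z \<otimes>\<^bsub>X\<^esub> z'"
      have kX: "k \<in> carrier X" unfolding k_def using z z' by simp
      have dk: "d k = \<one>\<^bsub>G\<^esub>" unfolding k_def using d_mult[OF _ z'(1)] d_inv[OF z] z z' dX by simp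
      have zk: "z \<otimes>\<^bsub>X\<^esub> k = z'" unfolding k_def using z z' by (simp add: X.m_assoc[symmetric] X.r_inv)
      have "\<beta> k = 1" using rad kX dk unfolding \<beta>_def by auto
      moreover have "\<gamma> (d z) (d k) x = 1" using gam_norm dX[OF z] dX[OF kX] xX dk by blast
      ultimately have "\<beta> z' = \<beta> z" using \<beta>mult[OF z kX] zk by simp
      then show ?thesis unfolding lam_def z'_def[symmetric] by simp
    qed
    have bij1: "bij_betw (\<lambda>n::nat. ()) {..<1} {()}" unfolding bij_betw_def inj_on_def by auto
    have objY0: "is_eq_obj G X act \<gamma> ({..<1}, \<lambda>j. (\<lambda>_. x) (((\<lambda>_::nat. ()) j)),
        \<lambda>h i j. if (\<lambda>_::nat. ()) i = (\<lambda>h s. s) h ((\<lambda>_::nat. ()) j) then (\<lambda>h s. lam h) h ((\<lambda>_::nat. ()) j) else 0)"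
    proof (rule monomial_obj[OF grpG bij1])
      show "\<And>h s. h \<in> carrier G \<Longrightarrow> s \<in> {()} \<Longrightarrow> s \<in> {()}" by simp
      show "\<And>s. s \<in> {()} \<Longrightarrow> s = s" by simp
      show "\<And>g h s. s = s" by simp
      show "\<And>s. x \<in> carrier X" using xX .
      show "\<And>h s. h \<in> carrier G \<Longrightarrow> s \<in> {()} \<Longrightarrow> x = act h x" using actx by simp
      show "lam h \<noteq> 0" if h: "h \<in> carrier G" for h
      proof -
        obtain v where v: "v \<in> carrier X" "h = d v" using h surj by blast
        show ?thesis using lam_d[OF v(1)] \<beta>nz[OF v(1)] v by simp
      qed
      show "lam (g \<otimes>\<^bsub>G\<^esub> h) = lam g * lam h * \<gamma> g h x"
        if g: "g \<in> carrier G" and h: "h \<in> carrier G" for g h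
      proof -
        obtain v where v: "v \<in> carrier X" "g = d v" using g surj by blast
        obtain w where w: "w \<in> carrier X" "h = d w" using h surj by blast
        have vw: "v \<otimes>\<^bsub>X\<^esub> w \<in> carrier X" using v w by simp
        have e1: "lam (g \<otimes>\<^bsub>G\<^esub> h) = 1 / \<beta> (v \<otimes>\<^bsub>X\<^esub> w)" using lam_d[OF vw] d_mult[OF v(1) w(1)] v w by simp
        have e2: "lam g = 1 / \<beta> v" using lam_d[OF v(1)] v by simp
        have e3: "lam h = 1 / \<beta> w" using lam_d[OF w(1)] w by simp
        have nz: "\<gamma> g h x \<noteq> 0" "\<beta> v \<noteq> 0" "\<beta> w \<noteq> 0" "\<beta> (v \<otimes>\<^bsub>X\<^esub> w) \<noteq> 0"
          using gam_nz g h xX \<beta>nz v w vw by auto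
        have m: "\<beta> (v \<otimes>\<^bsub>X\<^esub> w) * \<gamma> g h x = \<beta> v * \<beta> w" using \<beta>mult[OF v(1) w(1)] v w by simp
        show ?thesis unfolding e1 e2 e3 using nz m by (simp add: field_simps)
      qed
    qed
    let ?Y = "({..<1::nat}, \<lambda>_::nat. x, \<lambda>h (i::nat) (j::nat). lam h)"
    have objY: "is_eq_obj G X act \<gamma> ?Y" using objY0 by simp
    have transp: "double_braid_id d c ?Y Z \<and> double_braid_id d c Z ?Y" if Z: "is_eq_obj G X act \<gamma> Z" for Z
    proof -
      obtain BZ dZ uZ where Zd: "Z = (BZ, dZ, uZ)" by (cases Z) auto
      have objZ: "is_eq_obj G X act \<gamma> (BZ, dZ, uZ)" using Z Zd by simp
      have finZ: "finite BZ" and dZX: "\<And>b. b \<in> BZ \<Longrightarrow> dZ b \<in> carrier X" using objZ by (auto simp: is_eq_obj_def)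
      have uZ1: "\<And>i k. i \<in> BZ \<Longrightarrow> k \<in> BZ \<Longrightarrow> uZ (d x) i k = (if i = k then 1 else 0)"
        using obj_unit[OF objZ] dx by simp
      have key: "c z x * lam (d z) * c x z = 1" if z: "z \<in> carrier X" for z
        using lam_d[OF z] \<beta>nz[OF z] unfolding \<beta>_def by (simp add: field_simps)
      have A: "double_braid_id d c ?Y (BZ, dZ, uZ)"
        unfolding DB_iff[OF finite_lessThan finZ]
      proof (intro ballI)
        fix a1 b1 a2 b2 assume a1: "a1 \<in> {..<1::nat}" and b1: "b1 \<in> BZ" and a2: "a2 \<in> {..<1::nat}" and b2: "b2 \<in> BZ"
        show "c (dZ b1) x * lam (d (dZ b1)) * (c x (dZ b2) * uZ (d x) b1 b2) =
              (if a1 = a2 \<and> b1 = b2 then 1 else 0)"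
          using a1 a2 uZ1[OF b1 b2] key[OF dZX[OF b1]] by (auto simp: mult.assoc)
      qed
      have B: "double_braid_id d c (BZ, dZ, uZ) ?Y"
        unfolding DB_iff[OF finZ finite_lessThan]
      proof (intro ballI)
        fix a1 b1 a2 b2 assume a1: "a1 \<in> BZ" and b1: "b1 \<in> {..<1::nat}" and a2: "a2 \<in> BZ" and b2: "b2 \<in> {..<1::nat}"
        show "c x (dZ a2) * uZ (d x) a1 a2 * (c (dZ a2) x * lam (d (dZ a2))) =
              (if a1 = a2 \<and> b1 = b2 then 1 else 0)"
          using b1 b2 uZ1[OF a1 a2] key[OF dZX[OF a2]] by (auto simp: algebra_simps)
      qed
      show ?thesis using A B Zd by simp
    qed
    obtain n where iso: "eq_iso G ?Y (unit_sum X n)"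
      using nd objY transp unfolding eq_cat_nondegenerate_def by blast
    have "\<forall>b\<in>{..<1::nat}. x = \<one>\<^bsub>X\<^esub>" using iso_unit_sum[OF iso finite_lessThan] by blast
    then show False using xne by simp
  qed
qed

end


theorem proposition5p6:
  fixes G :: "('g, 'a) monoid_scheme" and X :: "('x, 'b) monoid_scheme"
    and act :: "'g \<Rightarrow> 'x \<Rightarrow> 'x" and d :: "'x \<Rightarrow> 'g"
    and \<omega> :: "'x \<Rightarrow> 'x \<Rightarrow> 'x \<Rightarrow> 'k::{alg_closed_field, field_char_0}"
    and \<gamma> :: "'g \<Rightarrow> 'g \<Rightarrow> 'x \<Rightarrow> 'k" and \<mu> :: "'g \<Rightarrow> 'x \<Rightarrow> 'x \<Rightarrow> 'k" and c :: "'x \<Rightarrow> 'x \<Rightarrow> 'k"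
  assumes "finite_crossed_module G X act d"
    and "quasi_abelian_3cocycle G X act d \<omega> \<gamma> \<mu> c"
    and "normalized_cocycle G X \<omega> \<gamma> \<mu> c"
  shows "eq_cat_nondegenerate G X act d \<gamma> c \<longleftrightarrow>
           d ` carrier X = carrier G \<and> nondegenerate_cocycle G X d c"
proof -
  interpret q: qac G X act d \<omega> \<gamma> \<mu> c by (rule qac.intro) (rule assms)+
  show ?thesis using q.forward_surj q.forward_nd q.backward by blast
qed

end
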